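(* Let $t_1,\dots,t_d$ be positive integers with $t_i\le n_i$ for all $i$ and $t_1=t_2\cdots t_d$, let $H$ be the stabilizer of $T=\sum_{\beta_2,\dots,\beta_d} e_1^{\iota(\beta_2,\dots,\beta_d)}\otimes e_2^{\beta_2}\otimes\cdots\otimes e_d^{\beta_d}$, so $\Lambda_{t_1\dots t_d}=G/H$. Then $G/H$ is reductive if and only if $n_i=t_i$ for all $i=1,\dots,d$. Moreover, in that case the orthogonal complement $\mathfrak{m}$ of $\mathfrak{h}$ in $\mathfrak{g}$ (with respect to $\langle Z,Z'\rangle=\sum_i\mathrm{tr}(Z_iZ_i'^{\mathsf T})$) satisfies $h\mathfrak{m}h^{-1}\subset\mathfrak{m}$ for all $h\in H$.
   Context: Fix integers $d\ge 3$ and $n_1,\dots,n_d\ge 2$. $V=\mathbb{R}^{n_1}\otimes\cdots\otimes\mathbb{R}^{n_d}$, and $G=\mathrm{GL}(n_1)\times\cdots\times\mathrm{GL}(n_d)$ acts on $V$ by $(g_1,\dots,g_d)\cdot(v_1\otimes\cdots\otimes v_d)=(g_1v_1)\otimes\cdots\otimes(g_dv_d)$, extended linearly. $e_i^1,\dots,e_i^{n_i}$ is the standard basis of $\mathbb{R}^{n_i}$. $\iota:[t_2]\times\cdots\times[t_d]\to[t_1]$ is the lexicographic bijection with $\beta_2$ most significant. $\mathfrak{g}=\mathfrak{gl}(n_1)\times\cdots\times\mathfrak{gl}(n_d)$ is the Lie algebra of $G$, $\mathfrak{h}$ the Lie algebra of $H$, and $H$ acts on $\mathfrak{g}$ by $hZh^{-1}=(h_iZ_ih_i^{-1})_i$.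 A homogeneous space $G/H$ is called reductive if there exists a linear subspace $\mathfrak{p}\subset\mathfrak{g}$ with $\mathfrak{p}\oplus\mathfrak{h}=\mathfrak{g}$ and $h\mathfrak{p}h^{-1}\subset\mathfrak{p}$ for all $h\in H$. *)

theory Defs
  imports Complex_Main "HOL-Library.FuncSet"
begin

text \<open>Tensor factors are indexed by 1..d. Square matrices of size m are
functions nat => nat => real that vanish outside the index range {0..<m}
(0-based, so the basis vector e_i^k of the paper is index k-1 here).
An element of G, g, or of any subset of them is a tuple Z :: nat => (nat => nat => real)
with Z i an n_i x n_i matrix for i in 1..d and Z i = 0 for i outside 1..d.\<close>

definition mats :: "nat \<Rightarrow> (nat \<Rightarrow> nat \<Rightarrow> real) set" where
  "mats m = {A. \<forall>a b. (m \<le> a \<or> m \<le> b) \<longrightarrow> A a b = 0}"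

definition mmul :: "nat \<Rightarrow> (nat \<Rightarrow> nat \<Rightarrow> real) \<Rightarrow> (nat \<Rightarrow> nat \<Rightarrow> real) \<Rightarrow> (nat \<Rightarrow> nat \<Rightarrow> real)" where
  "mmul m A B = (\<lambda>a b. if a < m \<and> b < m then (\<Sum>c<m. A a c * B c b) else 0)"

definition mid :: "nat \<Rightarrow> (nat \<Rightarrow> nat \<Rightarrow> real)" where
  "mid m = (\<lambda>a b. if a < m \<and> b < m \<and> a = b then 1 else 0)"

definition minvertible :: "nat \<Rightarrow> (nat \<Rightarrow> nat \<Rightarrow> real) \<Rightarrow> bool" where
  "minvertible m A \<longleftrightarrow> (\<exists>B\<in>mats m. mmul m A B = mid m \<and> mmul m B A = mid m)"

definition minv :: "nat \<Rightarrow> (nat \<Rightarrow> nat \<Rightarrow> real) \<Rightarrow> (nat \<Rightarrow> nat \<Rightarrow> real)" where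
  "minv m A = (THE B. B \<in> mats m \<and> mmul m A B = mid m \<and> mmul m B A = mid m)"

fun mpow :: "nat \<Rightarrow> (nat \<Rightarrow> nat \<Rightarrow> real) \<Rightarrow> nat \<Rightarrow> (nat \<Rightarrow> nat \<Rightarrow> real)" where
  "mpow m A 0 = mid m"
| "mpow m A (Suc k) = mmul m (mpow m A k) A"

definition mexp :: "nat \<Rightarrow> (nat \<Rightarrow> nat \<Rightarrow> real) \<Rightarrow> (nat \<Rightarrow> nat \<Rightarrow> real)" where
  "mexp m A = (\<lambda>a b. if a < m \<and> b < m then (\<Sum>k. mpow m A k a b / fact k) else 0)"

definition gl_alg :: "nat \<Rightarrow> (nat \<Rightarrow> nat) \<Rightarrow> (nat \<Rightarrow> nat \<Rightarrow> nat \<Rightarrow> real) set" where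
  "gl_alg d n = {Z. \<forall>i. (i \<in> {1..d} \<longrightarrow> Z i \<in> mats (n i)) \<and> (i \<notin> {1..d} \<longrightarrow> Z i = (\<lambda>a b. 0))}"

definition GLprod :: "nat \<Rightarrow> (nat \<Rightarrow> nat) \<Rightarrow> (nat \<Rightarrow> nat \<Rightarrow> nat \<Rightarrow> real) set" where
  "GLprod d n = {g \<in> gl_alg d n. \<forall>i\<in>{1..d}. minvertible (n i) (g i)}"

definition tidx :: "nat \<Rightarrow> (nat \<Rightarrow> nat) \<Rightarrow> (nat \<Rightarrow> nat) set" where
  "tidx d n = PiE {1..d} (\<lambda>i. {..<n i})"

definition tact :: "nat \<Rightarrow> (nat \<Rightarrow> nat) \<Rightarrow> (nat \<Rightarrow> nat \<Rightarrow> nat \<Rightarrow> real)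
     \<Rightarrow> ((nat \<Rightarrow> nat) \<Rightarrow> real) \<Rightarrow> ((nat \<Rightarrow> nat) \<Rightarrow> real)" where
  "tact d n g T = (\<lambda>\<alpha>. \<Sum>\<beta>\<in>tidx d n. (\<Prod>i\<in>{1..d}. g i (\<alpha> i) (\<beta> i)) * T \<beta>)"

text \<open>Lexicographic bijection iota (0-based), beta_2 most significant.\<close>
definition iota :: "nat \<Rightarrow> (nat \<Rightarrow> nat) \<Rightarrow> (nat \<Rightarrow> nat) \<Rightarrow> nat" where
  "iota d t \<beta> = (\<Sum>i\<in>{2..d}. \<beta> i * (\<Prod>j\<in>{i<..d}. t j))"

text \<open>The tensor T = sum over beta of e_1^{iota(beta)} (x) e_2^{beta_2} (x) ... (x) e_d^{beta_d},
given by its coordinates.\<close>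
definition Tten :: "nat \<Rightarrow> (nat \<Rightarrow> nat) \<Rightarrow> ((nat \<Rightarrow> nat) \<Rightarrow> real)" where
  "Tten d t = (\<lambda>\<alpha>. if (\<forall>i\<in>{2..d}. \<alpha> i < t i) \<and> \<alpha> 1 = iota d t \<alpha> then 1 else 0)"

definition stabilizer :: "nat \<Rightarrow> (nat \<Rightarrow> nat) \<Rightarrow> ((nat \<Rightarrow> nat) \<Rightarrow> real) \<Rightarrow> (nat \<Rightarrow> nat \<Rightarrow> nat \<Rightarrow> real) set" where
  "stabilizer d n T = {g \<in> GLprod d n. \<forall>\<alpha>\<in>tidx d n. tact d n g T \<alpha> = T \<alpha>}"

definition texp :: "nat \<Rightarrow> (nat \<Rightarrow> nat) \<Rightarrow> (nat \<Rightarrow> nat \<Rightarrow> nat \<Rightarrow> real) \<Rightarrow> (nat \<Rightarrow> nat \<Rightarrow> nat \<Rightarrow> real)" where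
  "texp d n Z = (\<lambda>i. if i \<in> {1..d} then mexp (n i) (Z i) else (\<lambda>a b. 0))"

definition lie_alg :: "nat \<Rightarrow> (nat \<Rightarrow> nat) \<Rightarrow> (nat \<Rightarrow> nat \<Rightarrow> nat \<Rightarrow> real) set \<Rightarrow> (nat \<Rightarrow> nat \<Rightarrow> nat \<Rightarrow> real) set" where
  "lie_alg d n H = {Z \<in> gl_alg d n. \<forall>s::real. texp d n (\<lambda>i a b. s * Z i a b) \<in> H}"

definition tconj :: "nat \<Rightarrow> (nat \<Rightarrow> nat) \<Rightarrow> (nat \<Rightarrow> nat \<Rightarrow> nat \<Rightarrow> real) \<Rightarrow> (nat \<Rightarrow> nat \<Rightarrow> nat \<Rightarrow> real) \<Rightarrow> (nat \<Rightarrow> nat \<Rightarrow> nat \<Rightarrow> real)" where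
  "tconj d n h Z = (\<lambda>i. if i \<in> {1..d} then mmul (n i) (mmul (n i) (h i) (Z i)) (minv (n i) (h i)) else (\<lambda>a b. 0))"

definition lin_subspace :: "(nat \<Rightarrow> nat \<Rightarrow> nat \<Rightarrow> real) set \<Rightarrow> bool" where
  "lin_subspace P \<longleftrightarrow> (\<lambda>i a b. 0) \<in> P
     \<and> (\<forall>X\<in>P. \<forall>Y\<in>P. (\<lambda>i a b. X i a b + Y i a b) \<in> P)
     \<and> (\<forall>c::real. \<forall>X\<in>P. (\<lambda>i a b. c * X i a b) \<in> P)"

definition reductive :: "nat \<Rightarrow> (nat \<Rightarrow> nat) \<Rightarrow> (nat \<Rightarrow> nat \<Rightarrow> nat \<Rightarrow> real) set \<Rightarrow> bool" where
  "reductive d n H \<longleftrightarrow> (\<exists>P. P \<subseteq> gl_alg d n \<and> lin_subspace P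
      \<and> P \<inter> lie_alg d n H = {(\<lambda>i a b. 0)}
      \<and> (\<forall>Z\<in>gl_alg d n. \<exists>X\<in>P. \<exists>Y\<in>lie_alg d n H. Z = (\<lambda>i a b. X i a b + Y i a b))
      \<and> (\<forall>h\<in>H. \<forall>X\<in>P. tconj d n h X \<in> P))"

definition tinner :: "nat \<Rightarrow> (nat \<Rightarrow> nat) \<Rightarrow> (nat \<Rightarrow> nat \<Rightarrow> nat \<Rightarrow> real) \<Rightarrow> (nat \<Rightarrow> nat \<Rightarrow> nat \<Rightarrow> real) \<Rightarrow> real" where
  "tinner d n Z Z' = (\<Sum>i\<in>{1..d}. \<Sum>a<n i. \<Sum>b<n i. Z i a b * Z' i a b)"

definition orth_compl :: "nat \<Rightarrow> (nat \<Rightarrow> nat) \<Rightarrow> (nat \<Rightarrow> nat \<Rightarrow> nat \<Rightarrow> real) set \<Rightarrow> (nat \<Rightarrow> nat \<Rightarrow> nat \<Rightarrow> real) set" where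
  "orth_compl d n S = {Z \<in> gl_alg d n. \<forall>Y\<in>S. tinner d n Z Y = 0}"

end

theory Submission
  imports Defs "Jordan_Normal_Form.Determinant"
begin

lemma mmul_mats[simp]: "mmul m A B \<in> mats m"
  by (simp add: mats_def mmul_def)

lemma mid_mats[simp]: "mid m \<in> mats m"
  by (simp add: mats_def mid_def)

lemma mmul_assoc: "mmul m (mmul m A B) C = mmul m A (mmul m B C)"
  unfolding mmul_def
  by (auto intro!: ext simp: sum_distrib_left sum_distrib_right mult.assoc intro: sum.swap)

lemma mmul_mid_left: "A \<in> mats m \<Longrightarrow> mmul m (mid m) A = A"
  unfolding mmul_def mid_def mats_def
  by (auto intro!: ext simp: if_distrib[of "\<lambda>x. x * _"] sum.delta cong: if_cong)

lemma mmul_mid_right: "A \<in> mats m \<Longrightarrow> mmul m A (mid m) = A"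
  unfolding mmul_def mid_def mats_def
  by (auto intro!: ext simp: if_distrib[of "\<lambda>x. _ * x"] sum.delta cong: if_cong)

lemma mpow_mats[simp]: "mpow m A k \<in> mats m"
  by (cases k) auto

lemma mpow_scale: "mpow m (\<lambda>a b. s * A a b) k = (\<lambda>a b. s^k * mpow m A k a b)"
  by (induction k) (auto intro!: ext simp: mmul_def mid_def sum_distrib_left mult_ac)

lemma mpow_Suc_left: "A \<in> mats m \<Longrightarrow> mpow m A (Suc k) = mmul m A (mpow m A k)"
proof (induction k)
  case 0 then show ?case by (simp add: mmul_mid_left mmul_mid_right)
next
  case (Suc k)
  have "mpow m A (Suc (Suc k)) = mmul m (mpow m A (Suc k)) A" by simp
  also have "\<dots> = mmul m (mmul m A (mpow m A k)) A" using Suc by simp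
  also have "\<dots> = mmul m A (mpow m A (Suc k))" by (simp add: mmul_assoc)
  finally show ?case .
qed

lemma mpow_bound:
  assumes M: "\<And>a b. \<bar>A a b\<bar> \<le> M" and "0 \<le> M"
  shows "\<bar>mpow m A k a b\<bar> \<le> (real m * M) ^ k"
proof (induction k arbitrary: a b)
  case 0 then show ?case by (simp add: mid_def)
next
  case (Suc k)
  have "\<bar>\<Sum>c<m. mpow m A k a c * A c b\<bar> \<le> (\<Sum>c<m. (real m * M) ^ k * M)"
    by (rule order_trans[OF sum_abs sum_mono])
       (auto simp: abs_mult intro!: mult_mono Suc M simp: \<open>0 \<le> M\<close>)
  also have "\<dots> = (real m * M) ^ Suc k" by (simp add: mult_ac)
  finally show ?case using \<open>0 \<le> M\<close> by (auto simp: mmul_def)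
qed

definition mbound :: "nat \<Rightarrow> (nat \<Rightarrow> nat \<Rightarrow> real) \<Rightarrow> real" where
  "mbound m A = (\<Sum>a<m. \<Sum>b<m. \<bar>A a b\<bar>)"

lemma mbound_ge: "A \<in> mats m \<Longrightarrow> \<bar>A a b\<bar> \<le> mbound m A"
proof (cases "a < m \<and> b < m")
  case True
  have "\<bar>A a b\<bar> \<le> (\<Sum>b<m. \<bar>A a b\<bar>)" by (rule member_le_sum) (use True in auto)
  also have "\<dots> \<le> mbound m A" unfolding mbound_def
    by (rule member_le_sum[where f="\<lambda>a. \<Sum>b<m. \<bar>A a b\<bar>"]) (use True in \<open>auto intro: sum_nonneg\<close>)
  finally show ?thesis .
next
  case False
  then have "A \<in> mats m \<Longrightarrow> A a b = 0" by (auto simp: mats_def)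
  moreover have "0 \<le> mbound m A" by (auto simp: mbound_def intro!: sum_nonneg)
  ultimately show "A \<in> mats m \<Longrightarrow> ?thesis" by simp
qed

lemma mpow_summable:
  assumes "A \<in> mats m"
  shows "summable (\<lambda>k. mpow m A k a b / fact k * y ^ k)"
proof -
  let ?M = "mbound m A"
  have M0: "0 \<le> ?M" by (auto simp: mbound_def intro!: sum_nonneg)
  have "summable (\<lambda>k. inverse (fact k) * (real m * ?M * \<bar>y\<bar>) ^ k)"
    by (rule summable_exp)
  then show ?thesis
  proof (rule summable_comparison_test'[where N=0])
    fix k :: nat
    have "\<bar>mpow m A k a b\<bar> \<le> (real m * ?M) ^ k"
      by (rule mpow_bound[OF mbound_ge[OF assms] M0])
    then have "\<bar>mpow m A k a b\<bar> * \<bar>y\<bar> ^ k \<le> (real m * ?M) ^ k * \<bar>y\<bar> ^ k"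
      by (rule mult_right_mono) simp
    then show "norm (mpow m A k a b / fact k * y ^ k) \<le> inverse (fact k) * (real m * ?M * \<bar>y\<bar>) ^ k"
      by (simp add: abs_mult power_abs divide_simps power_mult_distrib mult_ac)
  qed
qed

definition E :: "nat \<Rightarrow> (nat \<Rightarrow> nat \<Rightarrow> real) \<Rightarrow> real \<Rightarrow> (nat \<Rightarrow> nat \<Rightarrow> real)" where
  "E m A s = mexp m (\<lambda>x y. s * A x y)"

lemma E_series: "a < m \<Longrightarrow> b < m \<Longrightarrow> E m A s a b = (\<Sum>k. mpow m A k a b / fact k * s ^ k)"
  by (simp add: E_def mexp_def mpow_scale mult_ac)

lemma E_out: "\<not> (a < m \<and> b < m) \<Longrightarrow> E m A s a b = 0"
  unfolding E_def mexp_def by auto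

lemma mexp_mats[simp]: "mexp m B \<in> mats m"
  by (simp add: mexp_def mats_def)

lemma E_mats[simp]: "E m A s \<in> mats m"
  by (simp add: E_def)

definition Sser :: "nat \<Rightarrow> (nat \<Rightarrow> nat \<Rightarrow> real) \<Rightarrow> real \<Rightarrow> nat \<Rightarrow> nat \<Rightarrow> real" where
  "Sser m A s a b = (if a < m \<and> b < m then (\<Sum>k. mpow m A (Suc k) a b / fact k * s ^ k) else 0)"

lemma E_mul_right: 
  assumes "A \<in> mats m"
  shows "mmul m (E m A s) A = Sser m A s"
proof (intro ext)
  fix a b
  show "mmul m (E m A s) A a b = Sser m A s a b"
  proof (cases "a < m \<and> b < m")
    case True
    have "mmul m (E m A s) A a b = (\<Sum>c<m. (\<Sum>k. mpow m A k a c / fact k * s ^ k) * A c b)"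
      using True by (simp add: mmul_def E_series)
    also have "\<dots> = (\<Sum>c<m. (\<Sum>k. mpow m A k a c / fact k * s ^ k * A c b))"
      by (intro sum.cong refl suminf_mult2 mpow_summable assms)
    also have "\<dots> = (\<Sum>k. \<Sum>c<m. mpow m A k a c / fact k * s ^ k * A c b)"
      by (rule suminf_sum[symmetric]) (intro summable_mult2 mpow_summable assms)
    also have "\<dots> = (\<Sum>k. mpow m A (Suc k) a b / fact k * s ^ k)"
    proof (intro suminf_cong)
      fix k
      have "mpow m A (Suc k) a b / fact k * s ^ k = (\<Sum>c<m. mpow m A k a c * A c b) * (s ^ k / fact k)"
        using True by (simp add: mmul_def)
      also have "\<dots> = (\<Sum>c<m. mpow m A k a c * A c b * (s ^ k / fact k))"
        by (rule sum_distrib_right)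
      finally show "(\<Sum>c<m. mpow m A k a c / fact k * s ^ k * A c b) = mpow m A (Suc k) a b / fact k * s ^ k"
        by (simp add: mult_ac)
    qed
    finally show ?thesis using True by (simp add: Sser_def)
  qed (auto simp add: mmul_def Sser_def)
qed

lemma E_mul_left: 
  assumes "A \<in> mats m"
  shows "mmul m A (E m A s) = Sser m A s"
proof (intro ext)
  fix a b
  show "mmul m A (E m A s) a b = Sser m A s a b"
  proof (cases "a < m \<and> b < m")
    case True
    have "mmul m A (E m A s) a b = (\<Sum>c<m. A a c * (\<Sum>k. mpow m A k c b / fact k * s ^ k))"
      using True by (simp add: mmul_def E_series)
    also have "\<dots> = (\<Sum>c<m. (\<Sum>k. A a c * (mpow m A k c b / fact k * s ^ k)))"
      by (intro sum.cong refl suminf_mult[symmetric] mpow_summable assms)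
    also have "\<dots> = (\<Sum>k. \<Sum>c<m. A a c * (mpow m A k c b / fact k * s ^ k))"
      by (rule suminf_sum[symmetric]) (intro summable_mult mpow_summable assms)
    also have "\<dots> = (\<Sum>k. mpow m A (Suc k) a b / fact k * s ^ k)"
    proof (intro suminf_cong)
      fix k
      have "mpow m A (Suc k) a b / fact k * s ^ k = (\<Sum>c<m. A a c * mpow m A k c b) * (s ^ k / fact k)"
        using True by (simp del: mpow.simps add: mpow_Suc_left[OF assms] mmul_def)
      also have "\<dots> = (\<Sum>c<m. A a c * mpow m A k c b * (s ^ k / fact k))"
        by (rule sum_distrib_right)
      finally show "(\<Sum>c<m. A a c * (mpow m A k c b / fact k * s ^ k)) = mpow m A (Suc k) a b / fact k * s ^ k"
        by (simp add: mult_ac)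
    qed
    finally show ?thesis using True by (simp add: Sser_def)
  qed (auto simp add: mmul_def Sser_def)
qed

lemma E_comm: "A \<in> mats m \<Longrightarrow> mmul m A (E m A s) = mmul m (E m A s) A"
  by (simp add: E_mul_left E_mul_right)

lemma E_deriv:
  assumes "A \<in> mats m"
  shows "((\<lambda>s. E m A s a b) has_real_derivative mmul m (E m A s) A a b) (at s)"
proof (cases "a < m \<and> b < m")
  case True
  let ?c = "\<lambda>k. mpow m A k a b / fact k"
  have "((\<lambda>s. \<Sum>k. ?c k * s ^ k) has_real_derivative (\<Sum>k. diffs ?c k * s ^ k)) (at s)"
    by (rule termdiffs_strong_converges_everywhere) (rule mpow_summable[OF assms])
  moreover have "(\<Sum>k. diffs ?c k * s ^ k) = mmul m (E m A s) A a b"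
    using True by (simp add: E_mul_right[OF assms] Sser_def diffs_def divide_simps del: of_nat_Suc)
  moreover have "(\<lambda>s. E m A s a b) = (\<lambda>s. \<Sum>k. ?c k * s ^ k)"
    using True by (intro ext) (simp add: E_series)
  ultimately show ?thesis by simp
next
  case False
  then show ?thesis by (auto simp add: E_out mmul_def)
qed

lemma E_zero: "E m A 0 = mid m"
proof (intro ext)
  fix a b show "E m A 0 a b = mid m a b"
  proof (cases "a < m \<and> b < m")
    case True
    then show ?thesis by (simp only: E_series powser_zero) (auto simp: mid_def)
  qed (auto simp: E_out mid_def)
qed

lemma E_deriv_neg:
  assumes "A \<in> mats m"
  shows "((\<lambda>s. E m A (- s) a b) has_real_derivative - mmul m (E m A (-s)) A a b) (at s)"
proof -
  have "((\<lambda>s. E m A s a b) has_real_derivative mmul m (E m A (-s)) A a b) (at (-s))"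
    by (rule E_deriv[OF assms])
  from DERIV_mirror[THEN iffD1, OF this] show ?thesis by simp
qed

lemma E_inv:
  assumes A: "A \<in> mats m"
  shows "mmul m (E m A s) (E m A (-s)) = mid m"
proof (intro ext)
  fix a b
  let ?G = "\<lambda>s. mmul m (E m A s) (E m A (-s)) a b"
  have "\<forall>x. (?G has_real_derivative 0) (at x)"
  proof
    fix x
    show "(?G has_real_derivative 0) (at x)"
    proof (cases "a < m \<and> b < m")
      case True
      have d: "((\<lambda>s. \<Sum>c<m. E m A s a c * E m A (-s) c b) has_real_derivative
          (\<Sum>c<m. mmul m (E m A x) A a c * E m A (-x) c b + (- mmul m (E m A (-x)) A c b) * E m A x a c)) (at x)"
        by (intro DERIV_sum DERIV_mult E_deriv E_deriv_neg A)
      have 2: "(\<Sum>c<m. mmul m (E m A x) A a c * E m A (-x) c b + (- mmul m (E m A (-x)) A c b) * E m A x a c)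
          = mmul m (mmul m (E m A x) A) (E m A (-x)) a b - mmul m (E m A x) (mmul m (E m A (-x)) A) a b"
        using True by (simp add: mmul_def sum_subtractf[symmetric] algebra_simps)
      have 3: "mmul m (mmul m (E m A x) A) (E m A (-x)) = mmul m (E m A x) (mmul m (E m A (-x)) A)"
        by (simp add: mmul_assoc E_comm[OF A])
      have G: "?G = (\<lambda>s. \<Sum>c<m. E m A s a c * E m A (-s) c b)"
        using True by (simp add: mmul_def)
      show ?thesis unfolding G using d unfolding 2 3 by simp
    next
      case False
      then show ?thesis by (auto simp: mmul_def)
    qed
  qed
  then have "?G s = ?G 0" by (rule DERIV_isconst_all)
  then show "?G s = mid m a b" by (simp add: E_zero mmul_mid_left)
qed

lemma minv_unique:
  assumes "B \<in> mats m" "mmul m A B = mid m" "mmul m B A = mid m"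
  shows "minv m A = B"
  unfolding minv_def
proof (rule the_equality)
  show "B \<in> mats m \<and> mmul m A B = mid m \<and> mmul m B A = mid m" using assms by simp
next
  fix B' assume h: "B' \<in> mats m \<and> mmul m A B' = mid m \<and> mmul m B' A = mid m"
  have "B' = mmul m B' (mmul m A B)" using h assms by (simp add: mmul_mid_right)
  also have "\<dots> = mmul m (mmul m B' A) B" by (simp add: mmul_assoc)
  also have "\<dots> = B" using h assms by (simp add: mmul_mid_left)
  finally show "B' = B" .
qed

lemma minv_props:
  assumes "minvertible m A"
  shows "minv m A \<in> mats m" "mmul m A (minv m A) = mid m" "mmul m (minv m A) A = mid m"
proof -
  from assms obtain B where B: "B \<in> mats m" "mmul m A B = mid m" "mmul m B A = mid m"
    unfolding minvertible_def by blast
  then have "minv m A = B" by (rule minv_unique)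
  then show "minv m A \<in> mats m" "mmul m A (minv m A) = mid m" "mmul m (minv m A) A = mid m"
    using B by auto
qed

lemma E_invertible:
  assumes "A \<in> mats m"
  shows "minvertible m (E m A s)" "minv m (E m A s) = E m A (-s)"
proof -
  have 1: "mmul m (E m A s) (E m A (-s)) = mid m" by (rule E_inv[OF assms])
  have 2: "mmul m (E m A (-s)) (E m A s) = mid m" using E_inv[OF assms, of "-s"] by simp
  show "minvertible m (E m A s)" unfolding minvertible_def using 1 2 by (intro bexI[of _ "E m A (-s)"]) auto
  show "minv m (E m A s) = E m A (-s)" by (rule minv_unique) (use 1 2 in auto)
qed

definition gmul :: "nat \<Rightarrow> (nat \<Rightarrow> nat) \<Rightarrow> (nat \<Rightarrow> nat \<Rightarrow> nat \<Rightarrow> real) \<Rightarrow> (nat \<Rightarrow> nat \<Rightarrow> nat \<Rightarrow> real) \<Rightarrow> (nat \<Rightarrow> nat \<Rightarrow> nat \<Rightarrow> real)" where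
  "gmul d n g g' = (\<lambda>i. if i \<in> {1..d} then mmul (n i) (g i) (g' i) else (\<lambda>a b. 0))"

definition ej :: "nat \<Rightarrow> (nat \<Rightarrow> nat) \<Rightarrow> nat \<Rightarrow> (nat \<Rightarrow> nat \<Rightarrow> real) \<Rightarrow> (nat \<Rightarrow> nat \<Rightarrow> nat \<Rightarrow> real)" where
  "ej d n j A = (\<lambda>i. if i \<in> {1..d} then (if i = j then A else mid (n i)) else (\<lambda>a b. 0))"

definition gid :: "nat \<Rightarrow> (nat \<Rightarrow> nat) \<Rightarrow> (nat \<Rightarrow> nat \<Rightarrow> nat \<Rightarrow> real)" where
  "gid d n = (\<lambda>i. if i \<in> {1..d} then mid (n i) else (\<lambda>a b. 0))"

lemma finite_tidx[simp]: "finite (tidx d n)"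
  by (simp add: tidx_def finite_PiE)

lemma tidx_lt: "\<alpha> \<in> tidx d n \<Longrightarrow> i \<in> {1..d} \<Longrightarrow> \<alpha> i < n i"
  by (auto simp: tidx_def PiE_def Pi_def)

lemma tact_comp:
  assumes "\<alpha> \<in> tidx d n"
  shows "tact d n g (tact d n g' v) \<alpha> = tact d n (gmul d n g g') v \<alpha>"
proof -
  have "tact d n g (tact d n g' v) \<alpha>
      = (\<Sum>\<beta>\<in>tidx d n. (\<Prod>i\<in>{1..d}. g i (\<alpha> i) (\<beta> i)) * (\<Sum>\<gamma>\<in>tidx d n. (\<Prod>i\<in>{1..d}. g' i (\<beta> i) (\<gamma> i)) * v \<gamma>))"
    by (simp add: tact_def)
  also have "\<dots> = (\<Sum>\<gamma>\<in>tidx d n. (\<Sum>\<beta>\<in>tidx d n. (\<Prod>i\<in>{1..d}. g i (\<alpha> i) (\<beta> i) * g' i (\<beta> i) (\<gamma> i))) * v \<gamma>)"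
  proof -
    have "(\<Sum>\<beta>\<in>tidx d n. (\<Prod>i\<in>{1..d}. g i (\<alpha> i) (\<beta> i)) * (\<Sum>\<gamma>\<in>tidx d n. (\<Prod>i\<in>{1..d}. g' i (\<beta> i) (\<gamma> i)) * v \<gamma>))
      = (\<Sum>\<beta>\<in>tidx d n. \<Sum>\<gamma>\<in>tidx d n. (\<Prod>i\<in>{1..d}. g i (\<alpha> i) (\<beta> i)) * ((\<Prod>i\<in>{1..d}. g' i (\<beta> i) (\<gamma> i)) * v \<gamma>))"
      by (simp only: sum_distrib_left)
    also have "\<dots> = (\<Sum>\<gamma>\<in>tidx d n. \<Sum>\<beta>\<in>tidx d n. (\<Prod>i\<in>{1..d}. g i (\<alpha> i) (\<beta> i)) * ((\<Prod>i\<in>{1..d}. g' i (\<beta> i) (\<gamma> i)) * v \<gamma>))"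
      by (rule sum.swap)
    also have "\<dots> = (\<Sum>\<gamma>\<in>tidx d n. (\<Sum>\<beta>\<in>tidx d n. (\<Prod>i\<in>{1..d}. g i (\<alpha> i) (\<beta> i) * g' i (\<beta> i) (\<gamma> i))) * v \<gamma>)"
      by (simp only: sum_distrib_right prod.distrib mult.assoc)
    finally show ?thesis .
  qed
  also have "\<dots> = (\<Sum>\<gamma>\<in>tidx d n. (\<Prod>i\<in>{1..d}. gmul d n g g' i (\<alpha> i) (\<gamma> i)) * v \<gamma>)"
  proof (intro sum.cong refl arg_cong2[where f="(*)"])
    fix \<gamma> assume \<gamma>: "\<gamma> \<in> tidx d n"
    have "(\<Sum>\<beta>\<in>tidx d n. (\<Prod>i\<in>{1..d}. g i (\<alpha> i) (\<beta> i) * g' i (\<beta> i) (\<gamma> i)))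
        = (\<Prod>i\<in>{1..d}. \<Sum>b\<in>{..<n i}. g i (\<alpha> i) b * g' i b (\<gamma> i))"
      unfolding tidx_def by (rule prod_sum_PiE[symmetric]) auto
    also have "\<dots> = (\<Prod>i\<in>{1..d}. gmul d n g g' i (\<alpha> i) (\<gamma> i))"
      using assms \<gamma> by (intro prod.cong refl) (auto simp: gmul_def mmul_def tidx_lt)
    finally show "(\<Sum>\<beta>\<in>tidx d n. (\<Prod>i\<in>{1..d}. g i (\<alpha> i) (\<beta> i) * g' i (\<beta> i) (\<gamma> i)))
        = (\<Prod>i\<in>{1..d}. gmul d n g g' i (\<alpha> i) (\<gamma> i))" .
  qed
  also have "\<dots> = tact d n (gmul d n g g') v \<alpha>" by (simp add: tact_def)
  finally show ?thesis .
qed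

lemma tact_cong: "(\<And>\<beta>. \<beta> \<in> tidx d n \<Longrightarrow> v \<beta> = w \<beta>) \<Longrightarrow> tact d n g v = tact d n g w"
  unfolding tact_def by (intro ext sum.cong refl) auto

lemma tact_sum: "tact d n g (\<lambda>\<beta>. \<Sum>j\<in>J. v j \<beta>) \<alpha> = (\<Sum>j\<in>J. tact d n g (v j) \<alpha>)"
  unfolding tact_def by (simp add: sum_distrib_left sum.swap[of _ J])

lemma tact_gid:
  assumes "\<alpha> \<in> tidx d n"
  shows "tact d n (gid d n) v \<alpha> = v \<alpha>"
proof -
  have "tact d n (gid d n) v \<alpha> = (\<Sum>\<beta>\<in>tidx d n. (if \<beta> = \<alpha> then v \<beta> else 0))"
    unfolding tact_def
  proof (intro sum.cong refl)
    fix \<beta> assume \<beta>: "\<beta> \<in> tidx d n"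
    show "(\<Prod>i\<in>{1..d}. gid d n i (\<alpha> i) (\<beta> i)) * v \<beta> = (if \<beta> = \<alpha> then v \<beta> else 0)"
    proof (cases "\<beta> = \<alpha>")
      case True then show ?thesis using assms by (simp add: gid_def mid_def tidx_lt)
    next
      case False
      then obtain i where "\<beta> i \<noteq> \<alpha> i" by auto
      moreover have "i \<in> {1..d}"
      proof (rule ccontr)
        assume "i \<notin> {1..d}"
        then have "\<beta> i = undefined" "\<alpha> i = undefined" using \<beta> assms by (auto simp: tidx_def PiE_def extensional_def)
        with \<open>\<beta> i \<noteq> \<alpha> i\<close> show False by simp
      qed
      ultimately have "(\<Prod>i\<in>{1..d}. gid d n i (\<alpha> i) (\<beta> i)) = 0"
        by (intro prod_zero bexI[of _ i]) (auto simp: gid_def mid_def)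
      then show ?thesis using False by simp
    qed
  qed
  also have "\<dots> = v \<alpha>" using assms by simp
  finally show ?thesis .
qed

definition Eg :: "nat \<Rightarrow> (nat \<Rightarrow> nat) \<Rightarrow> (nat \<Rightarrow> nat \<Rightarrow> nat \<Rightarrow> real) \<Rightarrow> real \<Rightarrow> (nat \<Rightarrow> nat \<Rightarrow> nat \<Rightarrow> real)" where
  "Eg d n Z s = (\<lambda>i. if i \<in> {1..d} then E (n i) (Z i) s else (\<lambda>a b. 0))"

lemma texp_Eg: "texp d n (\<lambda>i a b. s * Z i a b) = Eg d n Z s"
  unfolding texp_def Eg_def E_def by (rule refl)

lemma gl_mats: "Z \<in> gl_alg d n \<Longrightarrow> i \<in> {1..d} \<Longrightarrow> Z i \<in> mats (n i)"
  by (simp add: gl_alg_def)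

lemma tact_deriv:
  assumes Z: "Z \<in> gl_alg d n"
  shows "((\<lambda>s. tact d n (Eg d n Z s) v \<alpha>) has_real_derivative
           (\<Sum>j\<in>{1..d}. tact d n (gmul d n (Eg d n Z s) (ej d n j (Z j))) v \<alpha>)) (at s)"
proof -
  have d1: "((\<lambda>s. \<Sum>\<beta>\<in>tidx d n. (\<Prod>i\<in>{1..d}. E (n i) (Z i) s (\<alpha> i) (\<beta> i)) * v \<beta>) has_real_derivative
      (\<Sum>\<beta>\<in>tidx d n. (\<Sum>j\<in>{1..d}. mmul (n j) (E (n j) (Z j) s) (Z j) (\<alpha> j) (\<beta> j) *
           (\<Prod>i\<in>{1..d}-{j}. E (n i) (Z i) s (\<alpha> i) (\<beta> i))) * v \<beta>)) (at s)"
    by (intro DERIV_sum DERIV_cmult_right has_field_derivative_prod E_deriv gl_mats[OF Z]) auto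
  have e1: "(\<lambda>s. tact d n (Eg d n Z s) v \<alpha>) = (\<lambda>s. \<Sum>\<beta>\<in>tidx d n. (\<Prod>i\<in>{1..d}. E (n i) (Z i) s (\<alpha> i) (\<beta> i)) * v \<beta>)"
    by (intro ext sum.cong refl arg_cong2[where f="(*)"] prod.cong) (auto simp: tact_def Eg_def)
  have e2: "(\<Sum>\<beta>\<in>tidx d n. (\<Sum>j\<in>{1..d}. mmul (n j) (E (n j) (Z j) s) (Z j) (\<alpha> j) (\<beta> j) *
           (\<Prod>i\<in>{1..d}-{j}. E (n i) (Z i) s (\<alpha> i) (\<beta> i))) * v \<beta>)
     = (\<Sum>j\<in>{1..d}. tact d n (gmul d n (Eg d n Z s) (ej d n j (Z j))) v \<alpha>)"
  proof -
    have "(\<Sum>\<beta>\<in>tidx d n. (\<Sum>j\<in>{1..d}. mmul (n j) (E (n j) (Z j) s) (Z j) (\<alpha> j) (\<beta> j) *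
           (\<Prod>i\<in>{1..d}-{j}. E (n i) (Z i) s (\<alpha> i) (\<beta> i))) * v \<beta>)
      = (\<Sum>j\<in>{1..d}. \<Sum>\<beta>\<in>tidx d n. mmul (n j) (E (n j) (Z j) s) (Z j) (\<alpha> j) (\<beta> j) *
           (\<Prod>i\<in>{1..d}-{j}. E (n i) (Z i) s (\<alpha> i) (\<beta> i)) * v \<beta>)"
      by (simp only: sum_distrib_right) (rule sum.swap)
    also have "\<dots> = (\<Sum>j\<in>{1..d}. tact d n (gmul d n (Eg d n Z s) (ej d n j (Z j))) v \<alpha>)"
      unfolding tact_def
    proof (intro sum.cong refl arg_cong2[where f="(*)"])
      fix j \<beta> assume j: "j \<in> {1..d}"
      have "(\<Prod>i\<in>{1..d}. gmul d n (Eg d n Z s) (ej d n j (Z j)) i (\<alpha> i) (\<beta> i))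
          = gmul d n (Eg d n Z s) (ej d n j (Z j)) j (\<alpha> j) (\<beta> j) *
            (\<Prod>i\<in>{1..d}-{j}. gmul d n (Eg d n Z s) (ej d n j (Z j)) i (\<alpha> i) (\<beta> i))"
        using j by (simp add: prod.remove)
      also have "\<dots> = mmul (n j) (E (n j) (Z j) s) (Z j) (\<alpha> j) (\<beta> j) *
           (\<Prod>i\<in>{1..d}-{j}. E (n i) (Z i) s (\<alpha> i) (\<beta> i))"
        using j by (intro arg_cong2[where f="(*)"] prod.cong refl)
          (auto simp: gmul_def Eg_def ej_def mmul_mid_right)
      finally show "mmul (n j) (E (n j) (Z j) s) (Z j) (\<alpha> j) (\<beta> j) *
           (\<Prod>i\<in>{1..d}-{j}. E (n i) (Z i) s (\<alpha> i) (\<beta> i)) 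
          = (\<Prod>i\<in>{1..d}. gmul d n (Eg d n Z s) (ej d n j (Z j)) i (\<alpha> i) (\<beta> i))" by simp
    qed
    finally show ?thesis .
  qed
  show ?thesis unfolding e1 using d1 unfolding e2 .
qed

definition Lv :: "nat \<Rightarrow> (nat \<Rightarrow> nat) \<Rightarrow> (nat \<Rightarrow> nat \<Rightarrow> nat \<Rightarrow> real) \<Rightarrow> ((nat \<Rightarrow> nat) \<Rightarrow> real) \<Rightarrow> ((nat \<Rightarrow> nat) \<Rightarrow> real)" where
  "Lv d n Z v = (\<lambda>\<alpha>. \<Sum>j\<in>{1..d}. tact d n (ej d n j (Z j)) v \<alpha>)"

lemma Eg_zero: "Eg d n Z 0 = gid d n"
  unfolding Eg_def gid_def E_zero by (rule refl)

lemma gmul_gid_left: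
  assumes "\<And>i. i \<in> {1..d} \<Longrightarrow> g i \<in> mats (n i)"
  shows "gmul d n (gid d n) g = (\<lambda>i. if i \<in> {1..d} then g i else (\<lambda>a b. 0))"
  using assms by (auto intro!: ext simp: gmul_def gid_def mmul_mid_left)

lemma tact_restrict_g:
  assumes "\<alpha> \<in> tidx d n"
  shows "tact d n (\<lambda>i. if i \<in> {1..d} then g i else (\<lambda>a b. 0)) v \<alpha> = tact d n g v \<alpha>"
  unfolding tact_def by (intro sum.cong refl arg_cong2[where f="(*)"] prod.cong) auto

lemma ej_mats: "A \<in> mats (n j) \<Longrightarrow> i \<in> {1..d} \<Longrightarrow> ej d n j A i \<in> mats (n i)"
  by (auto simp: ej_def)

lemma Eg_GL:
  assumes Z: "Z \<in> gl_alg d n"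
  shows "Eg d n Z s \<in> GLprod d n"
  using Z unfolding GLprod_def gl_alg_def Eg_def
  by (auto intro: E_invertible)

lemma deriv_at0:
  assumes Z: "Z \<in> gl_alg d n" and \<alpha>: "\<alpha> \<in> tidx d n"
  shows "((\<lambda>s. tact d n (Eg d n Z s) v \<alpha>) has_real_derivative Lv d n Z v \<alpha>) (at 0)"
proof -
  have "(\<Sum>j\<in>{1..d}. tact d n (gmul d n (Eg d n Z 0) (ej d n j (Z j))) v \<alpha>) = Lv d n Z v \<alpha>"
    unfolding Lv_def Eg_zero
  proof (intro sum.cong refl)
    fix j assume j: "j \<in> {1..d}"
    have "gmul d n (gid d n) (ej d n j (Z j)) = (\<lambda>i. if i \<in> {1..d} then ej d n j (Z j) i else (\<lambda>a b. 0))"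
      by (rule gmul_gid_left) (rule ej_mats[where n=n and j=j, OF gl_mats[OF Z j]])
    then show "tact d n (gmul d n (gid d n) (ej d n j (Z j))) v \<alpha> = tact d n (ej d n j (Z j)) v \<alpha>"
      using tact_restrict_g[OF \<alpha>] by simp
  qed
  then show ?thesis using tact_deriv[OF Z, of v \<alpha> 0] by simp
qed

lemma lie_alg_iff:
  "Z \<in> lie_alg d n (stabilizer d n v) \<longleftrightarrow> Z \<in> gl_alg d n \<and> (\<forall>\<alpha>\<in>tidx d n. Lv d n Z v \<alpha> = 0)"
proof
  assume h: "Z \<in> lie_alg d n (stabilizer d n v)"
  then have Z: "Z \<in> gl_alg d n" by (simp add: lie_alg_def)
  have "Lv d n Z v \<alpha> = 0" if \<alpha>: "\<alpha> \<in> tidx d n" for \<alpha>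
  proof -
    have "\<forall>s. tact d n (Eg d n Z s) v \<alpha> = v \<alpha>"
      using h \<alpha> by (auto simp: lie_alg_def texp_Eg stabilizer_def)
    then have "(\<lambda>s. tact d n (Eg d n Z s) v \<alpha>) = (\<lambda>s. v \<alpha>)" by auto
    then have "((\<lambda>s. v \<alpha>) has_real_derivative Lv d n Z v \<alpha>) (at 0)"
      using deriv_at0[OF Z \<alpha>, of v] by simp
    moreover have "((\<lambda>s. v \<alpha>) has_real_derivative 0) (at 0)" by simp
    ultimately show ?thesis by (rule DERIV_unique)
  qed
  with Z show "Z \<in> gl_alg d n \<and> (\<forall>\<alpha>\<in>tidx d n. Lv d n Z v \<alpha> = 0)" by auto
next
  assume h: "Z \<in> gl_alg d n \<and> (\<forall>\<alpha>\<in>tidx d n. Lv d n Z v \<alpha> = 0)"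
  then have Z: "Z \<in> gl_alg d n" and L0: "\<And>\<alpha>. \<alpha> \<in> tidx d n \<Longrightarrow> Lv d n Z v \<alpha> = 0" by auto
  have "Eg d n Z s \<in> stabilizer d n v" for s
  proof -
    have "tact d n (Eg d n Z s) v \<alpha> = v \<alpha>" if \<alpha>: "\<alpha> \<in> tidx d n" for \<alpha>
    proof -
      have "\<forall>x. ((\<lambda>s. tact d n (Eg d n Z s) v \<alpha>) has_real_derivative 0) (at x)"
      proof
        fix x
        have "(\<Sum>j\<in>{1..d}. tact d n (gmul d n (Eg d n Z x) (ej d n j (Z j))) v \<alpha>)
            = (\<Sum>j\<in>{1..d}. tact d n (Eg d n Z x) (tact d n (ej d n j (Z j)) v) \<alpha>)"
          using \<alpha> by (simp add: tact_comp)
        also have "\<dots> = tact d n (Eg d n Z x) (Lv d n Z v) \<alpha>"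
          unfolding Lv_def by (rule tact_sum[symmetric])
        also have "\<dots> = tact d n (Eg d n Z x) (\<lambda>_. 0) \<alpha>"
          by (subst tact_cong[of d n _ "\<lambda>_. 0"]) (auto simp: L0)
        also have "\<dots> = 0" by (simp add: tact_def)
        finally show "((\<lambda>s. tact d n (Eg d n Z s) v \<alpha>) has_real_derivative 0) (at x)"
          using tact_deriv[OF Z, of v \<alpha> x] by simp
      qed
      then have "tact d n (Eg d n Z s) v \<alpha> = tact d n (Eg d n Z 0) v \<alpha>"
        by (rule DERIV_isconst_all)
      also have "\<dots> = v \<alpha>" using \<alpha> by (simp add: Eg_zero tact_gid)
      finally show ?thesis .
    qed
    then show ?thesis using Eg_GL[OF Z] by (simp add: stabilizer_def)
  qed
  then show "Z \<in> lie_alg d n (stabilizer d n v)" using Z by (simp add: lie_alg_def texp_Eg)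
qed

definition iot :: "nat \<Rightarrow> nat \<Rightarrow> (nat \<Rightarrow> nat) \<Rightarrow> (nat \<Rightarrow> nat) \<Rightarrow> nat" where
  "iot a d t \<beta> = (\<Sum>i\<in>{a..d}. \<beta> i * (\<Prod>j\<in>{i<..d}. t j))"

lemma iota_iot: "iota d t \<beta> = iot 2 d t \<beta>"
  by (simp add: iota_def iot_def)

lemma iot_step: "a \<le> d \<Longrightarrow> iot a d t \<beta> = \<beta> a * (\<Prod>j\<in>{Suc a..d}. t j) + iot (Suc a) d t \<beta>"
proof -
  assume a: "a \<le> d"
  have "{a..d} = insert a {Suc a..d}" using a by auto
  then show ?thesis unfolding iot_def
    by (simp add: atLeastSucAtMost_greaterThanAtMost)
qed

lemma prod_step: "a \<le> d \<Longrightarrow> (\<Prod>i\<in>{a..d}. t i) = t a * (\<Prod>j\<in>{Suc a..d}. (t j::nat))"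
proof -
  assume a: "a \<le> d"
  have "{a..d} = insert a {Suc a..d}" using a by auto
  then show ?thesis by simp
qed

lemma iot_bound: "(\<forall>i\<in>{a..d}. \<beta> i < t i) \<Longrightarrow> iot a d t \<beta> < (\<Prod>i\<in>{a..d}. t i)"
proof (induction "Suc d - a" arbitrary: a)
  case 0 then show ?case by (simp add: iot_def)
next
  case (Suc k)
  show ?case
  proof (cases "a \<le> d")
    case False then show ?thesis by (simp add: iot_def)
  next
    case True
    let ?M = "\<Prod>j\<in>{Suc a..d}. t j"
    have r: "iot (Suc a) d t \<beta> < ?M" using Suc by auto
    from Suc.prems True have "\<beta> a < t a" by simp
    then have "Suc (\<beta> a) \<le> t a" by simp
    then have "Suc (\<beta> a) * ?M \<le> t a * ?M" by (rule mult_le_mono1)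
    then show ?thesis using r True by (simp add: iot_step prod_step)
  qed
qed

lemma iot_inj: "(\<forall>i\<in>{a..d}. \<beta> i < t i) \<Longrightarrow> (\<forall>i\<in>{a..d}. \<beta>' i < t i) \<Longrightarrow>
   iot a d t \<beta> = iot a d t \<beta>' \<Longrightarrow> \<forall>i\<in>{a..d}. \<beta> i = \<beta>' i"
proof (induction "Suc d - a" arbitrary: a)
  case 0 then show ?case by simp
next
  case (Suc k)
  show ?case
  proof (cases "a \<le> d")
    case False then show ?thesis by simp
  next
    case True
    let ?M = "\<Prod>j\<in>{Suc a..d}. t j"
    have r: "iot (Suc a) d t \<beta> < ?M" "iot (Suc a) d t \<beta>' < ?M"
      by (rule iot_bound, use Suc.prems in simp)+
    have M: "0 < ?M" by (rule le_less_trans[OF le0 r(1)])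
    have eq: "\<beta> a * ?M + iot (Suc a) d t \<beta> = \<beta>' a * ?M + iot (Suc a) d t \<beta>'"
      using Suc.prems True by (simp add: iot_step)
    have "(\<beta> a * ?M + iot (Suc a) d t \<beta>) div ?M = \<beta> a" using r M by simp
    moreover have "(\<beta>' a * ?M + iot (Suc a) d t \<beta>') div ?M = \<beta>' a" using r M by simp
    ultimately have 1: "\<beta> a = \<beta>' a" using eq by simp
    have "(\<beta> a * ?M + iot (Suc a) d t \<beta>) mod ?M = iot (Suc a) d t \<beta>" using r M by simp
    moreover have "(\<beta>' a * ?M + iot (Suc a) d t \<beta>') mod ?M = iot (Suc a) d t \<beta>'" using r M by simp
    ultimately have 2: "iot (Suc a) d t \<beta> = iot (Suc a) d t \<beta>'" using eq by simp
    have k: "k = Suc d - Suc a" using Suc.hyps(2) by simp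
    have p1: "\<forall>i\<in>{Suc a..d}. \<beta> i < t i" "\<forall>i\<in>{Suc a..d}. \<beta>' i < t i" using Suc.prems(1,2) by auto
    have "\<forall>i\<in>{Suc a..d}. \<beta> i = \<beta>' i"
      by (rule Suc.hyps(1)[OF k p1 2])
    then show ?thesis using 1 by (metis atLeastAtMost_iff le_antisym not_less_eq_eq)
  qed
qed

lemma iota_cong: "(\<And>k. k \<in> {2..d} \<Longrightarrow> \<beta> k = \<beta>' k) \<Longrightarrow> iota d t \<beta> = iota d t \<beta>'"
  unfolding iota_def by (intro sum.cong refl) auto

lemma iota_bound: "(\<forall>i\<in>{2..d}. \<beta> i < t i) \<Longrightarrow> iota d t \<beta> < (\<Prod>i\<in>{2..d}. t i)"
  by (simp add: iota_iot iot_bound)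

lemma iota_inj_pt: "(\<forall>i\<in>{2..d}. \<beta> i < t i) \<Longrightarrow> (\<forall>i\<in>{2..d}. \<beta>' i < t i) \<Longrightarrow>
   iota d t \<beta> = iota d t \<beta>' \<Longrightarrow> \<forall>i\<in>{2..d}. \<beta> i = \<beta>' i"
  unfolding iota_iot by (rule iot_inj)

abbreviation PI2 :: "nat \<Rightarrow> (nat \<Rightarrow> nat) \<Rightarrow> (nat \<Rightarrow> nat) set" where
  "PI2 d t \<equiv> PiE {2..d} (\<lambda>k. {..<t k})"

lemma PI2_lt: "\<gamma> \<in> PI2 d t \<Longrightarrow> \<forall>i\<in>{2..d}. \<gamma> i < t i"
  by (auto simp: PiE_def Pi_def)

lemma iota_bij:
  "bij_betw (iota d t) (PI2 d t) {..<(\<Prod>i\<in>{2..d}. t i)}"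
proof -
  have inj: "inj_on (iota d t) (PI2 d t)"
  proof (rule inj_onI)
    fix \<gamma> \<gamma>' assume g: "\<gamma> \<in> PI2 d t" "\<gamma>' \<in> PI2 d t" "iota d t \<gamma> = iota d t \<gamma>'"
    then have "\<forall>i\<in>{2..d}. \<gamma> i = \<gamma>' i" using iota_inj_pt PI2_lt by blast
    then show "\<gamma> = \<gamma>'" by (intro PiE_ext[OF g(1) g(2)]) auto
  qed
  have sub: "iota d t ` PI2 d t \<subseteq> {..<(\<Prod>i\<in>{2..d}. t i)}"
    using iota_bound PI2_lt by auto
  have "card (iota d t ` PI2 d t) = card (PI2 d t)" using inj by (rule card_image)
  also have "\<dots> = (\<Prod>i\<in>{2..d}. t i)" by (simp add: card_PiE)
  finally have "iota d t ` PI2 d t = {..<(\<Prod>i\<in>{2..d}. t i)}"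
    using sub by (intro card_subset_eq) auto
  then show ?thesis using inj by (simp add: bij_betw_def)
qed

lemma tidx_upd: "\<alpha> \<in> tidx d n \<Longrightarrow> j \<in> {1..d} \<Longrightarrow> c < n j \<Longrightarrow> \<alpha>(j := c) \<in> tidx d n"
  by (auto simp: tidx_def PiE_def Pi_def extensional_def)

lemma tidx_ext: "\<alpha> \<in> tidx d n \<Longrightarrow> i \<notin> {1..d} \<Longrightarrow> \<alpha> i = undefined"
  by (auto simp: tidx_def PiE_def extensional_def)

lemma tact_ej:
  assumes \<alpha>: "\<alpha> \<in> tidx d n" and j: "j \<in> {1..d}"
  shows "tact d n (ej d n j A) v \<alpha> = (\<Sum>c<n j. A (\<alpha> j) c * v (\<alpha>(j := c)))"
proof -
  let ?f = "\<lambda>\<beta>. (\<Prod>k\<in>{1..d}. ej d n j A k (\<alpha> k) (\<beta> k)) * v \<beta>"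
  let ?S = "(\<lambda>c. \<alpha>(j := c)) ` {..<n j}"
  have S: "?S \<subseteq> tidx d n" using tidx_upd[OF \<alpha> j] by auto
  have "tact d n (ej d n j A) v \<alpha> = sum ?f (tidx d n)" by (simp add: tact_def)
  also have "\<dots> = sum ?f ?S"
  proof (rule sum.mono_neutral_right[OF finite_tidx S])
    show "\<forall>\<beta>\<in>tidx d n - ?S. ?f \<beta> = 0"
    proof
      fix \<beta> assume \<beta>: "\<beta> \<in> tidx d n - ?S"
      have "\<exists>k\<in>{1..d}. k \<noteq> j \<and> \<beta> k \<noteq> \<alpha> k"
      proof (rule ccontr)
        assume "\<not> ?thesis"
        then have "\<beta> = \<alpha>(j := \<beta> j)"
          using \<beta> \<alpha> by (intro ext) (metis DiffD1 fun_upd_apply tidx_ext)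
        moreover have "\<beta> j < n j" using \<beta> j tidx_lt by blast
        ultimately have "\<beta> \<in> ?S" by auto
        with \<beta> show False by blast
      qed
      then obtain k where k: "k \<in> {1..d}" "k \<noteq> j" "\<beta> k \<noteq> \<alpha> k" by blast
      then have "(\<Prod>k\<in>{1..d}. ej d n j A k (\<alpha> k) (\<beta> k)) = 0"
        by (intro prod_zero bexI[of _ k]) (auto simp: ej_def mid_def)
      then show "?f \<beta> = 0" by simp
    qed
  qed
  also have "\<dots> = (\<Sum>c<n j. ?f (\<alpha>(j := c)))"
  proof -
    have "inj_on (\<lambda>c. \<alpha>(j := c)) {..<n j}" by (auto intro!: inj_onI dest: fun_cong[where x=j])
    then show ?thesis by (simp add: sum.reindex o_def)
  qed
  also have "\<dots> = (\<Sum>c<n j. A (\<alpha> j) c * v (\<alpha>(j := c)))"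
  proof (intro sum.cong refl)
    fix c assume c: "c \<in> {..<n j}"
    have "(\<Prod>k\<in>{1..d}. ej d n j A k (\<alpha> k) ((\<alpha>(j := c)) k))
        = ej d n j A j (\<alpha> j) c * (\<Prod>k\<in>{1..d}-{j}. ej d n j A k (\<alpha> k) ((\<alpha>(j := c)) k))"
      using j by (simp add: prod.remove)
    also have "\<dots> = A (\<alpha> j) c"
      using j \<alpha> by (auto simp: ej_def mid_def tidx_lt intro!: prod.neutral)
    finally show "?f (\<alpha>(j := c)) = A (\<alpha> j) c * v (\<alpha>(j := c))" by simp
  qed
  finally show ?thesis .
qed

lemma Lv_formula:
  assumes "\<alpha> \<in> tidx d n"
  shows "Lv d n Z v \<alpha> = (\<Sum>j\<in>{1..d}. \<Sum>c<n j. Z j (\<alpha> j) c * v (\<alpha>(j := c)))"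
  unfolding Lv_def by (intro sum.cong refl tact_ej assms) 

locale tsetup =
  fixes d :: nat and n t :: "nat \<Rightarrow> nat"
  assumes d3: "d \<ge> 3"
    and tpos: "\<forall>i\<in>{1..d}. 0 < t i \<and> t i \<le> n i"
    and t1: "t 1 = (\<Prod>i\<in>{2..d}. t i)"
begin

lemma tpos': "i \<in> {1..d} \<Longrightarrow> 0 < t i" "i \<in> {1..d} \<Longrightarrow> t i \<le> n i"
  using tpos by auto

lemma Tsupp:
  assumes "Tten d t \<beta> \<noteq> 0"
  shows "\<forall>k\<in>{2..d}. \<beta> k < t k" "\<beta> 1 = iota d t \<beta>" "\<beta> 1 < t 1"
proof -
  show 1: "\<forall>k\<in>{2..d}. \<beta> k < t k" "\<beta> 1 = iota d t \<beta>"
    using assms by (auto simp: Tten_def split: if_splits)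
  show "\<beta> 1 < t 1" using iota_bound[OF 1(1)] 1(2) t1 by simp
qed

lemma Tten_val: "Tten d t \<beta> = (if (\<forall>i\<in>{2..d}. \<beta> i < t i) \<and> \<beta> 1 = iota d t \<beta> then 1 else 0)"
  by (simp add: Tten_def)

lemma starform:
  assumes \<alpha>: "\<alpha> \<in> tidx d n"
  shows "tact d n g (Tten d t) \<alpha> = (\<Sum>\<gamma>\<in>PI2 d t. g 1 (\<alpha> 1) (iota d t \<gamma>) * (\<Prod>k\<in>{2..d}. g k (\<alpha> k) (\<gamma> k)))"
proof -
  let ?f = "\<lambda>\<beta>. (\<Prod>k\<in>{1..d}. g k (\<alpha> k) (\<beta> k)) * Tten d t \<beta>"
  let ?S = "{\<beta>\<in>tidx d n. Tten d t \<beta> \<noteq> 0}"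
  let ?h = "\<lambda>\<gamma>. \<gamma>(1 := iota d t \<gamma>)"
  have "tact d n g (Tten d t) \<alpha> = sum ?f (tidx d n)" by (simp add: tact_def)
  also have "\<dots> = sum ?f ?S"
    by (rule sum.mono_neutral_right) auto
  also have "\<dots> = (\<Sum>\<gamma>\<in>PI2 d t. ?f (?h \<gamma>))"
  proof (rule sum.reindex_bij_betw[symmetric])
    show "bij_betw ?h (PI2 d t) ?S"
    proof (rule bij_betw_byWitness[where f'="\<lambda>\<beta>. \<beta>(1 := undefined)"])
      show "\<forall>\<gamma>\<in>PI2 d t. (?h \<gamma>)(1 := undefined) = \<gamma>"
        by (auto simp: PiE_def extensional_def intro!: ext)
      show "\<forall>\<beta>\<in>?S. ?h (\<beta>(1 := undefined)) = \<beta>"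
      proof
        fix \<beta> assume \<beta>: "\<beta> \<in> ?S"
        have "iota d t (\<beta>(1 := undefined)) = iota d t \<beta>" by (rule iota_cong) auto
        then show "?h (\<beta>(1 := undefined)) = \<beta>" using Tsupp(2)[of \<beta>] \<beta> by auto
      qed
      show "?h ` PI2 d t \<subseteq> ?S"
      proof
        fix \<beta> assume "\<beta> \<in> ?h ` PI2 d t"
        then obtain \<gamma> where \<gamma>: "\<gamma> \<in> PI2 d t" and b: "\<beta> = ?h \<gamma>" by blast
        have io: "iota d t \<beta> = iota d t \<gamma>" unfolding b by (rule iota_cong) auto
        have lt: "\<forall>i\<in>{2..d}. \<gamma> i < t i" using PI2_lt[OF \<gamma>] .
        have "iota d t \<gamma> < t 1" using iota_bound[OF lt] t1 by simp
        have ltn: "\<gamma> i < n i" if "2 \<le> i" "i \<le> d" for i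
        proof -
          have "\<gamma> i < t i" using lt that by auto
          moreover have "t i \<le> n i" using tpos'(2)[of i] that by auto
          ultimately show ?thesis by simp
        qed
        have "t 1 \<le> n 1" using tpos'(2)[of 1] d3 by auto
        then have "\<beta> \<in> tidx d n" using \<gamma> \<open>iota d t \<gamma> < t 1\<close> ltn d3 unfolding b tidx_def
          by (auto simp: PiE_def Pi_def extensional_def)
        moreover have "Tten d t \<beta> = 1" using lt io by (simp add: Tten_def b)
        ultimately show "\<beta> \<in> ?S" by simp
      qed
      show "(\<lambda>\<beta>. \<beta>(1 := undefined)) ` ?S \<subseteq> PI2 d t"
      proof
        fix \<gamma> assume "\<gamma> \<in> (\<lambda>\<beta>. \<beta>(1 := undefined)) ` ?S"
        then obtain \<beta> where \<beta>: "\<beta> \<in> ?S" and g: "\<gamma> = \<beta>(1 := undefined)" by blast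
        have "\<forall>k\<in>{2..d}. \<beta> k < t k" using Tsupp(1)[of \<beta>] \<beta> by auto
        then show "\<gamma> \<in> PI2 d t" using \<beta> unfolding g
          by (auto simp: PiE_def Pi_def extensional_def tidx_def)
      qed
    qed
  qed
  also have "\<dots> = (\<Sum>\<gamma>\<in>PI2 d t. g 1 (\<alpha> 1) (iota d t \<gamma>) * (\<Prod>k\<in>{2..d}. g k (\<alpha> k) (\<gamma> k)))"
  proof (intro sum.cong refl)
    fix \<gamma> assume \<gamma>: "\<gamma> \<in> PI2 d t"
    have io: "iota d t (?h \<gamma>) = iota d t \<gamma>" by (rule iota_cong) auto
    have T1: "Tten d t (?h \<gamma>) = 1" using PI2_lt[OF \<gamma>] io by (simp add: Tten_def)
    have ins: "{1..d} = insert 1 {2..d}" using d3 by auto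
    have P1: "(\<Prod>k\<in>{1..d}. g k (\<alpha> k) ((?h \<gamma>) k)) = g 1 (\<alpha> 1) (iota d t \<gamma>) * (\<Prod>k\<in>{2..d}. g k (\<alpha> k) ((?h \<gamma>) k))"
      unfolding ins by (subst prod.insert) simp_all
    have P2: "(\<Prod>k\<in>{2..d}. g k (\<alpha> k) ((?h \<gamma>) k)) = (\<Prod>k\<in>{2..d}. g k (\<alpha> k) (\<gamma> k))"
      by (intro prod.cong refl) auto
    show "?f (?h \<gamma>) = g 1 (\<alpha> 1) (iota d t \<gamma>) * (\<Prod>k\<in>{2..d}. g k (\<alpha> k) (\<gamma> k))"
      unfolding T1 P1 P2 by simp
  qed
  finally show ?thesis .
qed

end

definition eunit :: "nat \<Rightarrow> nat \<Rightarrow> nat \<Rightarrow> nat \<Rightarrow> real" where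
  "eunit a b = (\<lambda>x y. if x = a \<and> y = b then 1 else 0)"

definition uc :: "nat \<Rightarrow> nat \<Rightarrow> real \<Rightarrow> nat \<Rightarrow> nat \<Rightarrow> real" where
  "uc m b c = (\<lambda>x y. mid m x y + c * eunit 0 b x y)"

definition sgl :: "nat \<Rightarrow> (nat \<Rightarrow> nat \<Rightarrow> real) \<Rightarrow> nat \<Rightarrow> nat \<Rightarrow> nat \<Rightarrow> real" where
  "sgl i A = (\<lambda>k. if k = i then A else (\<lambda>a b. 0))"

lemma uc_mats: "b < m \<Longrightarrow> uc m b c \<in> mats m"
  by (auto simp: mats_def uc_def mid_def eunit_def)

lemma eunit_mats: "a < m \<Longrightarrow> b < m \<Longrightarrow> eunit a b \<in> mats m"
  by (auto simp: mats_def eunit_def)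

lemma mmul_lin_left: "mmul m (\<lambda>x y. A x y + c * B x y) C = (\<lambda>x y. mmul m A C x y + c * mmul m B C x y)"
  by (auto simp: mmul_def sum.distrib sum_distrib_left algebra_simps intro!: ext)

lemma mmul_lin_right: "mmul m C (\<lambda>x y. A x y + c * B x y) = (\<lambda>x y. mmul m C A x y + c * mmul m C B x y)"
  by (auto simp: mmul_def sum.distrib sum_distrib_left algebra_simps intro!: ext)

lemma mmul_eunit_left: "mmul m (eunit a b) A = (\<lambda>x y. if x < m \<and> y < m \<and> x = a \<and> b < m then A b y else 0)"
proof (intro ext)
  fix x y
  show "mmul m (eunit a b) A x y = (if x < m \<and> y < m \<and> x = a \<and> b < m then A b y else 0)"
    by (cases "x = a") (auto simp: mmul_def eunit_def if_distrib[of "\<lambda>u. u * _"] cong: if_cong)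
qed

lemma mmul_eunit_right: "mmul m A (eunit a b) = (\<lambda>x y. if x < m \<and> y < m \<and> y = b \<and> a < m then A x a else 0)"
proof (intro ext)
  fix x y
  show "mmul m A (eunit a b) x y = (if x < m \<and> y < m \<and> y = b \<and> a < m then A x a else 0)"
    by (cases "y = b") (auto simp: mmul_def eunit_def if_distrib[of "\<lambda>u. _ * u"] cong: if_cong)
qed

lemma mmul_mid_right_gen: "mmul m A (mid m) = (\<lambda>x y. if x < m \<and> y < m then A x y else 0)"
  unfolding mmul_def mid_def
  by (auto intro!: ext simp: if_distrib[of "\<lambda>x. _ * x"] sum.delta cong: if_cong)

lemma mmul_mid_left_gen: "mmul m (mid m) A = (\<lambda>x y. if x < m \<and> y < m then A x y else 0)"
  unfolding mmul_def mid_def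
  by (auto intro!: ext simp: if_distrib[of "\<lambda>x. x * _"] sum.delta cong: if_cong)

lemma uc_mul:
  assumes "b \<noteq> 0" "b < m"
  shows "mmul m (uc m b c) (uc m b c') = uc m b (c + c')"
  unfolding uc_def mmul_lin_left mmul_lin_right
  using assms
  apply (simp add: mmul_mid_left mmul_mid_right eunit_mats mmul_eunit_left mmul_eunit_right)
  apply (auto intro!: ext simp: eunit_def mid_def algebra_simps)
  done

lemma conj_uc:
  assumes "b \<noteq> 0" "b < m" "A \<in> mats m"
  shows "mmul m (mmul m (uc m b c) A) (uc m b c') =
    (\<lambda>x y. A x y + c * (if x = 0 then A b y else 0) + c' * (if y = b then A x 0 else 0)
       + c * c' * (if x = 0 \<and> y = b then A b 0 else 0))"
  unfolding uc_def mmul_lin_left mmul_lin_right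
  using assms
  apply (simp add: mmul_mid_left_gen mmul_mid_right_gen mmul_eunit_left mmul_eunit_right mmul_lin_left mmul_lin_right)
  apply (auto intro!: ext simp: eunit_def mid_def algebra_simps mats_def)
  done


lemma mid_inv: "minvertible m (mid m)" "minv m (mid m) = mid m"
proof -
  have "mmul m (mid m) (mid m) = mid m" by (simp add: mmul_mid_left)
  then show "minvertible m (mid m)" "minv m (mid m) = mid m"
    unfolding minvertible_def by (auto intro: minv_unique)
qed

lemma uc_inv: assumes "b \<noteq> 0" "b < m" shows "minvertible m (uc m b c)" "minv m (uc m b c) = uc m b (-c)"
proof -
  have 1: "mmul m (uc m b c) (uc m b (-c)) = mid m" using uc_mul[OF assms, of c "-c"] by (simp add: uc_def)
  have 2: "mmul m (uc m b (-c)) (uc m b c) = mid m" using uc_mul[OF assms, of "-c" c] by (simp add: uc_def)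
  show "minvertible m (uc m b c)" unfolding minvertible_def using 1 2 uc_mats[OF assms(2)] by blast
  show "minv m (uc m b c) = uc m b (-c)" by (rule minv_unique) (use 1 2 uc_mats[OF assms(2)] in auto)
qed

context tsetup begin

lemma Tsupp_all: "Tten d t \<beta> \<noteq> 0 \<Longrightarrow> i \<in> {1..d} \<Longrightarrow> \<beta> i < t i"
  using Tsupp by (cases "i = 1") auto

definition Eu :: "nat \<Rightarrow> real \<Rightarrow> nat \<Rightarrow> nat \<Rightarrow> nat \<Rightarrow> real" where
  "Eu i c = ej d n i (uc (n i) (t i) c)"

lemma Eu_stab:
  assumes i: "i \<in> {1..d}" and tn: "t i < n i"
  shows "Eu i c \<in> stabilizer d n (Tten d t)"
proof -
  have b0: "t i \<noteq> 0" using tpos' i by auto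
  have gl: "Eu i c \<in> gl_alg d n"
    using uc_mats[OF tn] by (auto simp: gl_alg_def Eu_def ej_def)
  have inv: "\<forall>k\<in>{1..d}. minvertible (n k) (Eu i c k)"
    using uc_inv[OF b0 tn] mid_inv by (auto simp: Eu_def ej_def)
  have st: "tact d n (Eu i c) (Tten d t) \<alpha> = Tten d t \<alpha>" if \<alpha>: "\<alpha> \<in> tidx d n" for \<alpha>
  proof -
    have ai: "\<alpha> i < n i" using tidx_lt[OF \<alpha> i] .
    have "tact d n (Eu i c) (Tten d t) \<alpha> = (\<Sum>y<n i. uc (n i) (t i) c (\<alpha> i) y * Tten d t (\<alpha>(i := y)))"
      unfolding Eu_def by (rule tact_ej[OF \<alpha> i])
    also have "\<dots> = (\<Sum>y<n i. if y = \<alpha> i then Tten d t \<alpha> else 0)"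
    proof (intro sum.cong refl)
      fix y assume y: "y \<in> {..<n i}"
      show "uc (n i) (t i) c (\<alpha> i) y * Tten d t (\<alpha>(i := y)) = (if y = \<alpha> i then Tten d t \<alpha> else 0)"
      proof (cases "y = t i")
        case True
        have "Tten d t (\<alpha>(i := y)) = 0" using Tsupp_all[of "\<alpha>(i := y)" i] i True by auto
        moreover have "y = \<alpha> i \<Longrightarrow> Tten d t \<alpha> = 0" using Tsupp_all[of \<alpha> i] i True by auto
        ultimately show ?thesis by auto
      next
        case False
        then show ?thesis using y ai by (auto simp: uc_def mid_def eunit_def)
      qed
    qed
    also have "\<dots> = Tten d t \<alpha>" using ai by simp
    finally show ?thesis .
  qed
  show ?thesis using gl inv st by (simp add: stabilizer_def GLprod_def)
qed

lemma tconj_Eu: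
  assumes i: "i \<in> {1..d}" and tn: "t i < n i" and p: "p \<in> gl_alg d n"
  shows "tconj d n (Eu i c) p = (\<lambda>k. if k \<in> {1..d} then (if k = i then
      mmul (n i) (mmul (n i) (uc (n i) (t i) c) (p i)) (uc (n i) (t i) (-c)) else p k) else (\<lambda>a b. 0))"
proof -
  have b0: "t i \<noteq> 0" using tpos' i by auto
  show ?thesis
    using uc_inv[OF b0 tn] mid_inv gl_mats[OF p]
    by (auto intro!: ext simp: tconj_def Eu_def ej_def mmul_mid_left mmul_mid_right)
qed

lemma E0_lie:
  assumes i: "i \<in> {1..d}" and tn: "t i < n i"
  shows "sgl i (eunit 0 (t i)) \<in> lie_alg d n (stabilizer d n (Tten d t))"
  unfolding lie_alg_iff
proof
  show "sgl i (eunit 0 (t i)) \<in> gl_alg d n"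
    using eunit_mats[of 0 "n i" "t i"] tn i by (auto simp: gl_alg_def sgl_def mats_def)
  show "\<forall>\<alpha>\<in>tidx d n. Lv d n (sgl i (eunit 0 (t i))) (Tten d t) \<alpha> = 0"
  proof
    fix \<alpha> assume \<alpha>: "\<alpha> \<in> tidx d n"
    have "Tten d t (\<alpha>(i := t i)) = 0" using Tsupp_all[of "\<alpha>(i := t i)" i] i by auto
    then show "Lv d n (sgl i (eunit 0 (t i))) (Tten d t) \<alpha> = 0"
      unfolding Lv_formula[OF \<alpha>]
      by (intro sum.neutral ballI) (auto simp: sgl_def eunit_def)
  qed
qed

definition a0 :: "nat \<Rightarrow> nat \<Rightarrow> nat" where
  "a0 i = (\<lambda>k. if k \<in> {1..d} then (if k = i then t i else 0) else undefined)"

lemma a0_tidx: "i \<in> {1..d} \<Longrightarrow> t i < n i \<Longrightarrow> a0 i \<in> tidx d n"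
  using tpos by (force simp: a0_def tidx_def PiE_def Pi_def extensional_def)

lemma T_a0:
  assumes i: "i \<in> {1..d}"
  shows "Tten d t ((a0 i)(i := c)) = (if c = 0 then 1 else 0)"
proof (cases "c = 0")
  case True
  let ?\<beta> = "(a0 i)(i := c)"
  have "\<forall>k\<in>{2..d}. ?\<beta> k < t k" using tpos True by (auto simp: a0_def)
  moreover have "iota d t ?\<beta> = 0" unfolding iota_def by (intro sum.neutral) (auto simp: a0_def True)
  moreover have "?\<beta> 1 = 0" using True d3 by (auto simp: a0_def)
  ultimately show ?thesis using True by (simp add: Tten_def)
next
  case False
  let ?\<beta> = "(a0 i)(i := c)"
  have "Tten d t ?\<beta> = 0"
  proof (rule ccontr)
    assume T: "Tten d t ?\<beta> \<noteq> 0"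
    note S = Tsupp[OF T]
    show False
    proof (cases "i = 1")
      case True
      have "iota d t ?\<beta> = 0" unfolding iota_def by (intro sum.neutral) (auto simp: a0_def True)
      then show False using S(2) True False by simp
    next
      case i1: False
      have z: "\<forall>k\<in>{2..d}. (0::nat) < t k" using tpos by auto
      have "iota d t (\<lambda>k. 0) = 0" by (simp add: iota_def)
      moreover have "?\<beta> 1 = 0" using i1 d3 by (auto simp: a0_def)
      ultimately have "iota d t ?\<beta> = iota d t (\<lambda>k. 0)" using S(2) by simp
      then have "\<forall>k\<in>{2..d}. ?\<beta> k = 0" by (rule iota_inj_pt[OF S(1) z])
      moreover have "i \<in> {2..d}" using i i1 by auto
      ultimately have "?\<beta> i = 0" by blast
      then show False using False by simp
    qed
  qed
  then show ?thesis using False by simp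
qed

lemma sum_single: "finite A \<Longrightarrow> x \<in> A \<Longrightarrow> (\<And>y. y \<in> A \<Longrightarrow> y \<noteq> x \<Longrightarrow> f y = 0) \<Longrightarrow> sum f A = f x"
  by (simp add: sum.remove sum.neutral)

lemma Lv_a0:
  assumes i: "i \<in> {1..d}" and tn: "t i < n i"
  shows "Lv d n Y (Tten d t) (a0 i) = Y i (t i) 0"
proof -
  have \<alpha>: "a0 i \<in> tidx d n" by (rule a0_tidx[OF i tn])
  have "Lv d n Y (Tten d t) (a0 i) = (\<Sum>j\<in>{1..d}. \<Sum>c<n j. Y j (a0 i j) c * Tten d t ((a0 i)(j := c)))"
    by (rule Lv_formula[OF \<alpha>])
  also have "\<dots> = (\<Sum>c<n i. Y i (a0 i i) c * Tten d t ((a0 i)(i := c)))"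
  proof (rule sum_single[OF _ i])
    fix j assume j: "j \<in> {1..d}" "j \<noteq> i"
    have "Tten d t ((a0 i)(j := c)) = 0" for c
      using Tsupp_all[of "(a0 i)(j := c)" i] i j by (auto simp: a0_def)
    then show "(\<Sum>c<n j. Y j (a0 i j) c * Tten d t ((a0 i)(j := c))) = 0" by simp
  qed simp
  also have "\<dots> = Y i (a0 i i) 0 * Tten d t ((a0 i)(i := 0))"
    by (rule sum_single) (use tn T_a0[OF i] in auto)
  also have "\<dots> = Y i (t i) 0" using T_a0[OF i, of 0] i by (simp add: a0_def)
  finally show ?thesis .
qed

lemma not_reductive:
  assumes ex: "\<exists>i\<in>{1..d}. n i \<noteq> t i"
  shows "\<not> reductive d n (stabilizer d n (Tten d t))"
proof
  assume "reductive d n (stabilizer d n (Tten d t))"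
  then obtain P where Pgl: "P \<subseteq> gl_alg d n" and Plin: "lin_subspace P"
    and Pint: "P \<inter> lie_alg d n (stabilizer d n (Tten d t)) = {(\<lambda>i a b. 0)}"
    and Pdec: "\<forall>Z\<in>gl_alg d n. \<exists>X\<in>P. \<exists>Y\<in>lie_alg d n (stabilizer d n (Tten d t)). Z = (\<lambda>i a b. X i a b + Y i a b)"
    and Pinv: "\<forall>h\<in>stabilizer d n (Tten d t). \<forall>X\<in>P. tconj d n h X \<in> P"
    unfolding reductive_def by blast
  have add: "\<And>X Y. X \<in> P \<Longrightarrow> Y \<in> P \<Longrightarrow> (\<lambda>i a b. X i a b + Y i a b) \<in> P"
    and scl: "\<And>c X. X \<in> P \<Longrightarrow> (\<lambda>i a b. c * X i a b) \<in> P"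
    using Plin unfolding lin_subspace_def by blast+
  from ex obtain i where i: "i \<in> {1..d}" and nt: "n i \<noteq> t i" by blast
  have tn: "t i < n i" using nt tpos i by force
  let ?b = "t i"
  have b0: "?b \<noteq> 0" using tpos' i by auto
  let ?X = "sgl i (eunit ?b 0)"
  have Xgl: "?X \<in> gl_alg d n"
    using eunit_mats[of ?b "n i" 0] tn i by (auto simp: gl_alg_def sgl_def mats_def)
  obtain p y where p: "p \<in> P" and y: "y \<in> lie_alg d n (stabilizer d n (Tten d t))"
    and Xpy: "?X = (\<lambda>i a b. p i a b + y i a b)"
    using Pdec Xgl by blast
  have pgl: "p \<in> gl_alg d n" using p Pgl by blast
  have pi: "p i \<in> mats (n i)" using gl_mats[OF pgl i] .
  have q1: "tconj d n (Eu i 1) p \<in> P" using Pinv Eu_stab[OF i tn] p by blast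
  have q2: "tconj d n (Eu i (-1)) p \<in> P" using Pinv Eu_stab[OF i tn] p by blast
  have q: "(\<lambda>k a b. (\<lambda>k a b. tconj d n (Eu i 1) p k a b + tconj d n (Eu i (-1)) p k a b) k a b + (-2) * p k a b) \<in> P"
    by (intro add scl q1 q2 p)
  have qeq: "(\<lambda>k a b. (\<lambda>k a b. tconj d n (Eu i 1) p k a b + tconj d n (Eu i (-1)) p k a b) k a b + (-2) * p k a b)
     = (\<lambda>k a b. (-2 * p i ?b 0) * sgl i (eunit 0 ?b) k a b)"
  proof (intro ext)
    fix k a b
    show "(\<lambda>k a b. tconj d n (Eu i 1) p k a b + tconj d n (Eu i (-1)) p k a b) k a b + (-2) * p k a b
        = (-2 * p i ?b 0) * sgl i (eunit 0 ?b) k a b"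
    proof (cases "k \<in> {1..d}")
      case False
      then have "p k = (\<lambda>a b. 0)" using pgl by (simp add: gl_alg_def)
      then show ?thesis using False i by (auto simp: tconj_Eu[OF i tn pgl] sgl_def)
    next
      case k: True
      show ?thesis
      proof (cases "k = i")
        case False
        then show ?thesis using k by (simp add: tconj_Eu[OF i tn pgl] sgl_def)
      next
        case True
        have "p i a b = 0" if "\<not> (a < n i \<and> b < n i)" using pi that by (auto simp: mats_def)
        then show ?thesis using True k
          by (auto simp: tconj_Eu[OF i tn pgl] conj_uc[OF b0 tn pi] sgl_def eunit_def algebra_simps)
      qed
    qed
  qed
  have pb0: "p i ?b 0 = 0"
  proof (rule ccontr)
    assume nz: "p i ?b 0 \<noteq> 0"
    have "(\<lambda>k a b. (-1 / (2 * p i ?b 0)) * ((-2 * p i ?b 0) * sgl i (eunit 0 ?b) k a b)) \<in> P"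
      using scl q qeq by metis
    moreover have "(\<lambda>k a b. (-1 / (2 * p i ?b 0)) * ((-2 * p i ?b 0) * sgl i (eunit 0 ?b) k a b))
        = sgl i (eunit 0 ?b)" using nz by (auto intro!: ext)
    ultimately have "sgl i (eunit 0 ?b) \<in> P" by simp
    with E0_lie[OF i tn] Pint have "sgl i (eunit 0 ?b) = (\<lambda>i a b. 0)" by blast
    then have "sgl i (eunit 0 ?b) i 0 ?b = 0" by simp
    then show False by (simp add: sgl_def eunit_def)
  qed
  have "?X i ?b 0 = p i ?b 0 + y i ?b 0" using Xpy by metis
  then have y1: "y i ?b 0 = 1" using pb0 by (simp add: sgl_def eunit_def)
  have "Lv d n y (Tten d t) (a0 i) = 0" using y a0_tidx[OF i tn] by (simp add: lie_alg_iff)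
  then have "y i ?b 0 = 0" using Lv_a0[OF i tn] by simp
  with y1 show False by simp
qed

end

context tsetup begin

lemma mmul_zero_left: "mmul m (\<lambda>a b. 0) B = (\<lambda>a b. 0)"
  by (auto simp: mmul_def intro!: ext)

lemma mmul_zero_right: "mmul m B (\<lambda>a b. 0) = (\<lambda>a b. 0)"
  by (auto simp: mmul_def intro!: ext)

definition ginv :: "nat \<Rightarrow> nat \<Rightarrow> nat" where
  "ginv c = the_inv_into (PI2 d t) (iota d t) c"

lemma bij1: "bij_betw (iota d t) (PI2 d t) {..<t 1}"
  using iota_bij t1 by simp

lemma ginv_props: "c < t 1 \<Longrightarrow> ginv c \<in> PI2 d t \<and> iota d t (ginv c) = c"
proof -
  assume c: "c < t 1"
  have "the_inv_into (PI2 d t) (iota d t) c \<in> PI2 d t"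
    using bij_betwE[OF bij_betw_the_inv_into[OF bij1]] c by auto
  moreover have "iota d t (the_inv_into (PI2 d t) (iota d t) c) = c"
  proof -
    have inj: "inj_on (iota d t) (PI2 d t)" using bij1 by (simp add: bij_betw_def)
    have mem: "c \<in> iota d t ` PI2 d t" using bij1 c by (simp add: bij_betw_def)
    show ?thesis by (rule f_the_inv_into_f[OF inj mem])
  qed
  ultimately show ?thesis unfolding ginv_def by simp
qed

lemma ginv_iota: "\<gamma> \<in> PI2 d t \<Longrightarrow> ginv (iota d t \<gamma>) = \<gamma>"
  using bij1 unfolding ginv_def bij_betw_def by (simp add: the_inv_into_f_f)

lemma d1: "1 \<in> {1..d}" using d3 by auto

lemma ins1: "{1..d} = insert 1 {2..d}" using d3 by auto

context
  assumes nt: "\<forall>i\<in>{1..d}. n i = t i"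
begin

lemma tidx_lt_t: "\<alpha> \<in> tidx d n \<Longrightarrow> i \<in> {1..d} \<Longrightarrow> \<alpha> i < t i"
  using tidx_lt nt by force

lemma restr_PI2: "\<alpha> \<in> tidx d n \<Longrightarrow> restrict \<alpha> {2..d} \<in> PI2 d t"
  using tidx_lt_t by (auto simp: PiE_def Pi_def)

lemma ginv_alpha: "\<alpha> \<in> tidx d n \<Longrightarrow> (ginv (iota d t \<alpha>))(1 := \<alpha> 1) = \<alpha>"
proof -
  assume \<alpha>: "\<alpha> \<in> tidx d n"
  have "iota d t \<alpha> = iota d t (restrict \<alpha> {2..d})" by (rule iota_cong) auto
  then have "ginv (iota d t \<alpha>) = restrict \<alpha> {2..d}" using ginv_iota[OF restr_PI2[OF \<alpha>]] by simp
  then show ?thesis using \<alpha> tidx_ext[OF \<alpha>] by (auto intro!: ext)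
qed

lemma mk_tidx: "a < t 1 \<Longrightarrow> c < t 1 \<Longrightarrow> (ginv c)(1 := a) \<in> tidx d n \<and> iota d t ((ginv c)(1 := a)) = c"
proof -
  assume a: "a < t 1" and c: "c < t 1"
  have g: "ginv c \<in> PI2 d t" "iota d t (ginv c) = c" using ginv_props[OF c] by auto
  have "iota d t ((ginv c)(1 := a)) = iota d t (ginv c)" by (rule iota_cong) auto
  moreover have "(ginv c)(1 := a) \<in> tidx d n"
    using g(1) a nt d3 unfolding tidx_def by (auto simp: PiE_def Pi_def extensional_def)
  ultimately show ?thesis using g by simp
qed

lemma T_upd1: "\<alpha> \<in> tidx d n \<Longrightarrow> Tten d t (\<alpha>(1 := c)) = (if c = iota d t \<alpha> then 1 else 0)"
proof -
  assume \<alpha>: "\<alpha> \<in> tidx d n"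
  have "iota d t (\<alpha>(1 := c)) = iota d t \<alpha>" by (rule iota_cong) auto
  moreover have "\<forall>i\<in>{2..d}. \<alpha> i < t i" using tidx_lt_t[OF \<alpha>] by auto
  ultimately show ?thesis by (simp add: Tten_def)
qed

definition Rr :: "(nat \<Rightarrow> nat \<Rightarrow> nat \<Rightarrow> real) \<Rightarrow> (nat \<Rightarrow> nat) \<Rightarrow> real" where
  "Rr Y \<alpha> = (\<Sum>j\<in>{2..d}. \<Sum>c<n j. Y j (\<alpha> j) c * Tten d t (\<alpha>(j := c)))"

lemma Lv_split: "\<alpha> \<in> tidx d n \<Longrightarrow> Lv d n Y (Tten d t) \<alpha> = Y 1 (\<alpha> 1) (iota d t \<alpha>) + Rr Y \<alpha>"
proof -
  assume \<alpha>: "\<alpha> \<in> tidx d n"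
  have io: "iota d t \<alpha> < n 1" using iota_bound[of d \<alpha> t] tidx_lt_t[OF \<alpha>] t1 nt d1 by auto
  have "Lv d n Y (Tten d t) \<alpha> = (\<Sum>c<n 1. Y 1 (\<alpha> 1) c * Tten d t (\<alpha>(1 := c))) + Rr Y \<alpha>"
    unfolding Lv_formula[OF \<alpha>] Rr_def ins1 by (subst sum.insert) auto
  also have "(\<Sum>c<n 1. Y 1 (\<alpha> 1) c * Tten d t (\<alpha>(1 := c))) = Y 1 (\<alpha> 1) (iota d t \<alpha>)"
  proof -
    have e: "\<And>c. Y 1 (\<alpha> 1) c * Tten d t (\<alpha>(1 := c)) = (if c = iota d t \<alpha> then Y 1 (\<alpha> 1) (iota d t \<alpha>) else 0)"
      using T_upd1[OF \<alpha>] by simp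
    show ?thesis unfolding e using io by simp
  qed
  finally show ?thesis .
qed

definition PP :: "(nat \<Rightarrow> nat \<Rightarrow> nat \<Rightarrow> real) set" where
  "PP = {Z \<in> gl_alg d n. \<forall>k\<in>{2..d}. Z k = (\<lambda>a b. 0)}"

lemma Rr_P: "Z \<in> PP \<Longrightarrow> Rr Z \<alpha> = 0"
  by (simp add: Rr_def PP_def)

lemma zero_lie: "(\<lambda>i a b. 0) \<in> lie_alg d n (stabilizer d n (Tten d t))"
  by (simp add: lie_alg_iff Lv_formula gl_alg_def mats_def)

lemma reductive_nt: "reductive d n (stabilizer d n (Tten d t))"
  unfolding reductive_def
proof (intro exI[of _ PP] conjI)
  show "PP \<subseteq> gl_alg d n" by (auto simp: PP_def)
  show "lin_subspace PP"
    by (auto simp: lin_subspace_def PP_def gl_alg_def mats_def)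
  show "PP \<inter> lie_alg d n (stabilizer d n (Tten d t)) = {(\<lambda>i a b. 0)}"
  proof
    show "{(\<lambda>i a b. 0)} \<subseteq> PP \<inter> lie_alg d n (stabilizer d n (Tten d t))"
      using zero_lie by (auto simp: PP_def gl_alg_def mats_def)
  next
    show "PP \<inter> lie_alg d n (stabilizer d n (Tten d t)) \<subseteq> {(\<lambda>i a b. 0)}"
    proof
      fix W assume W: "W \<in> PP \<inter> lie_alg d n (stabilizer d n (Tten d t))"
      have Wgl: "W \<in> gl_alg d n" using W by (auto simp: PP_def)
      have L: "\<forall>\<alpha>\<in>tidx d n. Lv d n W (Tten d t) \<alpha> = 0" using W by (simp add: lie_alg_iff)
      have W1: "W 1 a c = 0" for a c
      proof (cases "a < t 1 \<and> c < t 1")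
        case True
        then obtain \<alpha> where \<alpha>: "\<alpha> \<in> tidx d n" "\<alpha> 1 = a" "iota d t \<alpha> = c" using mk_tidx by fastforce
        have "Lv d n W (Tten d t) \<alpha> = W 1 a c" using Lv_split[OF \<alpha>(1)] Rr_P W \<alpha> by simp
        then show ?thesis using L \<alpha> by simp
      next
        case False
        then show ?thesis using gl_mats[OF Wgl d1] nt d1 by (auto simp: mats_def)
      qed
      have "W = (\<lambda>i a b. 0)"
      proof (intro ext)
        fix k a b
        show "W k a b = 0"
        proof (cases "k = 1")
          case True then show ?thesis using W1 by simp
        next
          case False
          then show ?thesis using W Wgl ins1 by (cases "k \<in> {1..d}") (auto simp: PP_def gl_alg_def)
        qed
      qed
      then show "W \<in> {(\<lambda>i a b. 0)}" by simp
    qed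
  qed
  show "\<forall>Z\<in>gl_alg d n. \<exists>X\<in>PP. \<exists>Y\<in>lie_alg d n (stabilizer d n (Tten d t)). Z = (\<lambda>i a b. X i a b + Y i a b)"
  proof
    fix Z assume Z: "Z \<in> gl_alg d n"
    define Y1 where "Y1 = (\<lambda>a c. if a < t 1 \<and> c < t 1 then - Rr Z ((ginv c)(1 := a)) else 0)"
    define Y where "Y = (\<lambda>k. if k = 1 then Y1 else Z k)"
    have RY: "Rr Y \<alpha> = Rr Z \<alpha>" for \<alpha> unfolding Rr_def Y_def by (intro sum.cong refl) auto
    have Ygl: "Y \<in> gl_alg d n"
      using Z nt d1 unfolding gl_alg_def Y_def Y1_def mats_def by auto
    have Ylie: "Y \<in> lie_alg d n (stabilizer d n (Tten d t))"
      unfolding lie_alg_iff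
    proof (intro conjI Ygl ballI)
      fix \<alpha> assume \<alpha>: "\<alpha> \<in> tidx d n"
      have lt: "\<alpha> 1 < t 1" "iota d t \<alpha> < t 1"
        using tidx_lt_t[OF \<alpha> d1] iota_bound[of d \<alpha> t] tidx_lt_t[OF \<alpha>] t1 by auto
      have "Y 1 (\<alpha> 1) (iota d t \<alpha>) = - Rr Z \<alpha>"
        using lt ginv_alpha[OF \<alpha>] by (simp add: Y_def Y1_def)
      then show "Lv d n Y (Tten d t) \<alpha> = 0" using Lv_split[OF \<alpha>] RY by simp
    qed
    define X where "X = (\<lambda>k a b. Z k a b - Y k a b)"
    have "X \<in> PP"
      using Z Ygl unfolding PP_def X_def by (auto simp: gl_alg_def mats_def Y_def)
    moreover have "Z = (\<lambda>i a b. X i a b + Y i a b)" by (simp add: X_def)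
    ultimately show "\<exists>X\<in>PP. \<exists>Y\<in>lie_alg d n (stabilizer d n (Tten d t)). Z = (\<lambda>i a b. X i a b + Y i a b)"
      using Ylie by blast
  qed
  show "\<forall>h\<in>stabilizer d n (Tten d t). \<forall>X\<in>PP. tconj d n h X \<in> PP"
    by (auto simp: PP_def tconj_def gl_alg_def mmul_zero_left mmul_zero_right)
qed

end

end

definition mtr :: "(nat \<Rightarrow> nat \<Rightarrow> real) \<Rightarrow> nat \<Rightarrow> nat \<Rightarrow> real" where
  "mtr A = (\<lambda>x y. A y x)"

lemma mtr_mats: "A \<in> mats m \<Longrightarrow> mtr A \<in> mats m"
  by (auto simp: mats_def mtr_def)

lemma mmul_mtr: "mmul m (mtr A) (mtr B) = mtr (mmul m B A)"
  by (auto simp: mmul_def mtr_def mult.commute intro!: ext)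

lemma mtr_mid: "mtr (mid m) = mid m"
  by (auto simp: mtr_def mid_def intro!: ext)

lemma jnf_inverse:
  fixes F G :: "nat \<Rightarrow> nat \<Rightarrow> real"
  assumes "\<And>a e. a < N \<Longrightarrow> e < N \<Longrightarrow> (\<Sum>c<N. F a c * G c e) = (if a = e then 1 else 0)"
  shows "\<And>a e. a < N \<Longrightarrow> e < N \<Longrightarrow> (\<Sum>c<N. G a c * F c e) = (if a = e then 1 else 0)"
proof -
  let ?A = "mat N N (\<lambda>(a, c). F a c)" and ?B = "mat N N (\<lambda>(a, c). G a c)"
  have AB: "?A * ?B = 1\<^sub>m N"
  proof (rule eq_matI)
    fix i j assume ij: "i < dim_row (1\<^sub>m N :: real mat)" "j < dim_col (1\<^sub>m N :: real mat)"
    then have "(?A * ?B) $$ (i, j) = (\<Sum>c<N. F i c * G c j)"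
      by (simp add: scalar_prod_def lessThan_atLeast0)
    also have "\<dots> = 1\<^sub>m N $$ (i, j)" using ij assms by simp
    finally show "(?A * ?B) $$ (i, j) = 1\<^sub>m N $$ (i, j)" .
  qed auto
  have BA: "?B * ?A = 1\<^sub>m N"
    by (rule mat_mult_left_right_inverse[OF _ _ AB]) auto
  fix a e assume ae: "a < N" "e < N"
  have "(\<Sum>c<N. G a c * F c e) = (?B * ?A) $$ (a, e)"
    using ae by (simp add: scalar_prod_def lessThan_atLeast0)
  also have "\<dots> = (if a = e then 1 else 0)" unfolding BA using ae by simp
  finally show "(\<Sum>c<N. G a c * F c e) = (if a = e then 1 else 0)" .
qed


context tsetup begin
context
  assumes nt: "\<forall>i\<in>{1..d}. n i = t i"
begin

lemma reindex_PI2: "(\<Sum>\<gamma>\<in>PI2 d t. F \<gamma>) = (\<Sum>c<t 1. F (ginv c))"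
proof -
  have "(\<Sum>\<gamma>\<in>PI2 d t. F (ginv (iota d t \<gamma>))) = (\<Sum>c\<in>{..<t 1}. F (ginv c))"
    by (rule sum.reindex_bij_betw[OF bij1])
  moreover have "(\<Sum>\<gamma>\<in>PI2 d t. F (ginv (iota d t \<gamma>))) = (\<Sum>\<gamma>\<in>PI2 d t. F \<gamma>)"
    by (intro sum.cong refl) (simp add: ginv_iota)
  ultimately show ?thesis by simp
qed

definition KK :: "(nat \<Rightarrow> nat \<Rightarrow> nat \<Rightarrow> real) \<Rightarrow> (nat \<Rightarrow> nat) \<Rightarrow> (nat \<Rightarrow> nat) \<Rightarrow> real" where
  "KK h \<delta> \<gamma> = (\<Prod>k\<in>{2..d}. h k (\<delta> k) (\<gamma> k))"

lemma KK_cong: "(\<And>k. k \<in> {2..d} \<Longrightarrow> \<delta> k = \<delta>' k) \<Longrightarrow> (\<And>k. k \<in> {2..d} \<Longrightarrow> \<gamma> k = \<gamma>' k) \<Longrightarrow> KK h \<delta> \<gamma> = KK h \<delta>' \<gamma>'"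
  unfolding KK_def by (intro prod.cong refl) auto

lemma T_tidx: "\<alpha> \<in> tidx d n \<Longrightarrow> Tten d t \<alpha> = (if \<alpha> 1 = iota d t \<alpha> then 1 else 0)"
  using tidx_lt_t[OF nt] by (auto simp: Tten_def)

lemma transp_stab:
  assumes h: "h \<in> stabilizer d n (Tten d t)" and \<alpha>: "\<alpha> \<in> tidx d n"
  shows "tact d n (\<lambda>k. if k \<in> {1..d} then mtr (h k) else (\<lambda>a b. 0)) (Tten d t) \<alpha> = Tten d t \<alpha>"
proof -
  have hst: "\<And>\<alpha>. \<alpha> \<in> tidx d n \<Longrightarrow> tact d n h (Tten d t) \<alpha> = Tten d t \<alpha>"
    using h by (simp add: stabilizer_def)
  have AB: "(\<Sum>c<t 1. h 1 a c * KK h (ginv e) (ginv c)) = (if a = e then 1 else 0)"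
    if ae: "a < t 1" "e < t 1" for a e
  proof -
    obtain \<beta> where \<beta>: "\<beta> = (ginv e)(1 := a)" by blast
    have \<beta>t: "\<beta> \<in> tidx d n" "iota d t \<beta> = e" using mk_tidx[OF nt ae] \<beta> by auto
    have "tact d n h (Tten d t) \<beta> = (\<Sum>\<gamma>\<in>PI2 d t. h 1 a (iota d t \<gamma>) * KK h (ginv e) \<gamma>)"
      unfolding starform[OF \<beta>t(1)] KK_def using \<beta> by (intro sum.cong refl arg_cong2[where f="(*)"] prod.cong) auto
    also have "\<dots> = (\<Sum>c<t 1. h 1 a c * KK h (ginv e) (ginv c))"
      unfolding reindex_PI2 by (intro sum.cong refl) (simp add: ginv_props)
    finally have "(\<Sum>c<t 1. h 1 a c * KK h (ginv e) (ginv c)) = Tten d t \<beta>" using hst[OF \<beta>t(1)] by simp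
    also have "\<dots> = (if a = e then 1 else 0)" using T_tidx[OF \<beta>t(1)] \<beta>t \<beta> by simp
    finally show ?thesis .
  qed
  have BA: "(\<Sum>c<t 1. KK h (ginv c) (ginv e) * h 1 c a) = (if e = a then 1 else 0)"
    if ae: "e < t 1" "a < t 1" for a e
    using jnf_inverse[where F="\<lambda>a c. h 1 a c" and G="\<lambda>c e. KK h (ginv e) (ginv c)", OF AB ae] by simp
  have io: "iota d t \<alpha> < t 1" using iota_bound[of d \<alpha> t] tidx_lt_t[OF nt \<alpha>] t1 by auto
  have a1: "\<alpha> 1 < t 1" using tidx_lt_t[OF nt \<alpha> d1] .
  have "tact d n (\<lambda>k. if k \<in> {1..d} then mtr (h k) else (\<lambda>a b. 0)) (Tten d t) \<alpha>
      = (\<Sum>\<gamma>\<in>PI2 d t. h 1 (iota d t \<gamma>) (\<alpha> 1) * KK h \<gamma> \<alpha>)"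
    unfolding starform[OF \<alpha>] KK_def using d1 by (intro sum.cong refl arg_cong2[where f="(*)"] prod.cong) (auto simp: mtr_def)
  also have "\<dots> = (\<Sum>c<t 1. KK h (ginv c) (ginv (iota d t \<alpha>)) * h 1 c (\<alpha> 1))"
    unfolding reindex_PI2
  proof (intro sum.cong refl)
    fix c assume c: "c \<in> {..<t 1}"
    have "KK h (ginv c) \<alpha> = KK h (ginv c) (ginv (iota d t \<alpha>))"
    proof (intro KK_cong refl)
      fix k assume k: "k \<in> {2..d}"
      then have "k \<noteq> 1" by auto
      have "((ginv (iota d t \<alpha>))(1 := \<alpha> 1)) k = \<alpha> k" using ginv_alpha[OF nt \<alpha>] by simp
      then show "\<alpha> k = ginv (iota d t \<alpha>) k" using \<open>k \<noteq> 1\<close> by simp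
    qed
    then show "h 1 (iota d t (ginv c)) (\<alpha> 1) * KK h (ginv c) \<alpha> = KK h (ginv c) (ginv (iota d t \<alpha>)) * h 1 c (\<alpha> 1)"
      using c ginv_props[of c] by simp
  qed
  also have "\<dots> = (if iota d t \<alpha> = \<alpha> 1 then 1 else 0)" by (rule BA[OF io a1])
  also have "\<dots> = Tten d t \<alpha>" using T_tidx[OF \<alpha>] by auto
  finally show ?thesis .
qed

end
end

definition mtrace :: "nat \<Rightarrow> (nat \<Rightarrow> nat \<Rightarrow> real) \<Rightarrow> real" where
  "mtrace m P = (\<Sum>a<m. P a a)"

lemma pair_tr: "(\<Sum>a<m. \<Sum>b<m. M a b * Y a b) = mtrace m (mmul m M (mtr Y))"
  by (simp add: mtrace_def mmul_def mtr_def)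

lemma tr_comm: "mtrace m (mmul m A B) = mtrace m (mmul m B A)"
  unfolding mtrace_def mmul_def by (simp add: mult.commute) (rule sum.swap)

lemma mtr_mmul: "mtr (mmul m A B) = mmul m (mtr B) (mtr A)"
  by (simp add: mmul_mtr)

lemma mtr_mtr[simp]: "mtr (mtr A) = A"
  by (simp add: mtr_def)

lemma inner_conj:
  "(\<Sum>a<m. \<Sum>b<m. mmul m (mmul m H Z) Hi a b * Y a b)
   = (\<Sum>a<m. \<Sum>b<m. Z a b * mmul m (mmul m (mtr H) Y) (mtr Hi) a b)"
proof -
  have "(\<Sum>a<m. \<Sum>b<m. mmul m (mmul m H Z) Hi a b * Y a b) = mtrace m (mmul m (mmul m (mmul m H Z) Hi) (mtr Y))"
    by (rule pair_tr)
  also have "\<dots> = mtrace m (mmul m H (mmul m Z (mmul m Hi (mtr Y))))" by (simp add: mmul_assoc)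
  also have "\<dots> = mtrace m (mmul m (mmul m Z (mmul m Hi (mtr Y))) H)" by (rule tr_comm)
  also have "\<dots> = mtrace m (mmul m Z (mtr (mmul m (mmul m (mtr H) Y) (mtr Hi))))"
    by (simp add: mtr_mmul mmul_assoc)
  also have "\<dots> = (\<Sum>a<m. \<Sum>b<m. Z a b * mmul m (mmul m (mtr H) Y) (mtr Hi) a b)"
    by (rule pair_tr[symmetric])
  finally show ?thesis .
qed

context tsetup begin
context
  assumes nt: "\<forall>i\<in>{1..d}. n i = t i"
begin

definition gT :: "(nat \<Rightarrow> nat \<Rightarrow> nat \<Rightarrow> real) \<Rightarrow> (nat \<Rightarrow> nat \<Rightarrow> nat \<Rightarrow> real)" where
  "gT h = (\<lambda>k. if k \<in> {1..d} then mtr (h k) else (\<lambda>a b. 0))"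

definition gTi :: "(nat \<Rightarrow> nat \<Rightarrow> nat \<Rightarrow> real) \<Rightarrow> (nat \<Rightarrow> nat \<Rightarrow> nat \<Rightarrow> real)" where
  "gTi h = (\<lambda>k. if k \<in> {1..d} then mtr (minv (n k) (h k)) else (\<lambda>a b. 0))"

lemma h_props:
  assumes h: "h \<in> stabilizer d n (Tten d t)" and k: "k \<in> {1..d}"
  shows "h k \<in> mats (n k)" "minv (n k) (h k) \<in> mats (n k)"
    "mmul (n k) (h k) (minv (n k) (h k)) = mid (n k)" "mmul (n k) (minv (n k) (h k)) (h k) = mid (n k)"
proof -
  have "h \<in> GLprod d n" using h by (simp add: stabilizer_def)
  then have hg: "h \<in> gl_alg d n" and inv: "minvertible (n k) (h k)" using k by (auto simp: GLprod_def)
  show "h k \<in> mats (n k)" using gl_mats[OF hg k] .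
  show "minv (n k) (h k) \<in> mats (n k)" "mmul (n k) (h k) (minv (n k) (h k)) = mid (n k)"
    "mmul (n k) (minv (n k) (h k)) (h k) = mid (n k)" using minv_props[OF inv] by auto
qed

lemma gT_gTi:
  assumes h: "h \<in> stabilizer d n (Tten d t)"
  shows "gmul d n (gT h) (gTi h) = gid d n" "gmul d n (gTi h) (gT h) = gid d n"
  using h_props[OF h] by (auto intro!: ext simp: gmul_def gT_def gTi_def gid_def mmul_mtr mtr_mid)

lemma gTi_stab:
  assumes h: "h \<in> stabilizer d n (Tten d t)" and \<alpha>: "\<alpha> \<in> tidx d n"
  shows "tact d n (gTi h) (Tten d t) \<alpha> = Tten d t \<alpha>"
proof -
  have "tact d n (gTi h) (Tten d t) = tact d n (gTi h) (tact d n (gT h) (Tten d t))"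
    by (rule tact_cong) (use transp_stab[OF nt h] in \<open>simp add: gT_def\<close>)
  then have "tact d n (gTi h) (Tten d t) \<alpha> = tact d n (gmul d n (gTi h) (gT h)) (Tten d t) \<alpha>"
    using tact_comp[OF \<alpha>] by simp
  also have "\<dots> = Tten d t \<alpha>" using gT_gTi(2)[OF h] tact_gid[OF \<alpha>] by simp
  finally show ?thesis .
qed

definition Yc :: "(nat \<Rightarrow> nat \<Rightarrow> nat \<Rightarrow> real) \<Rightarrow> (nat \<Rightarrow> nat \<Rightarrow> nat \<Rightarrow> real) \<Rightarrow> (nat \<Rightarrow> nat \<Rightarrow> nat \<Rightarrow> real)" where
  "Yc h Y = (\<lambda>k. if k \<in> {1..d} then mmul (n k) (mmul (n k) (gT h k) (Y k)) (gTi h k) else (\<lambda>a b. 0))"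

lemma Yc_lie:
  assumes h: "h \<in> stabilizer d n (Tten d t)" and Y: "Y \<in> lie_alg d n (stabilizer d n (Tten d t))"
  shows "Yc h Y \<in> lie_alg d n (stabilizer d n (Tten d t))"
  unfolding lie_alg_iff
proof (intro conjI ballI)
  have Ygl: "Y \<in> gl_alg d n" and L0: "\<And>\<alpha>. \<alpha> \<in> tidx d n \<Longrightarrow> Lv d n Y (Tten d t) \<alpha> = 0"
    using Y by (auto simp: lie_alg_iff)
  show "Yc h Y \<in> gl_alg d n" by (auto simp: Yc_def gl_alg_def)
  fix \<alpha> assume \<alpha>: "\<alpha> \<in> tidx d n"
  have ejY: "ej d n j (Yc h Y j) = gmul d n (gT h) (gmul d n (ej d n j (Y j)) (gTi h))" if j: "j \<in> {1..d}" for j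
  proof (rule ext)
    fix k
    show "ej d n j (Yc h Y j) k = gmul d n (gT h) (gmul d n (ej d n j (Y j)) (gTi h)) k"
    proof (cases "k \<in> {1..d}")
      case k: True
      have "mmul (n k) (gT h k) (gTi h k) = mid (n k)"
        using fun_cong[OF gT_gTi(1)[OF h], of k] k by (simp add: gmul_def gid_def)
      moreover have "gTi h k \<in> mats (n k)" using h_props[OF h k] k by (simp add: gTi_def mtr_mats)
      ultimately show ?thesis using k j
        by (auto simp: ej_def gmul_def Yc_def mmul_assoc mmul_mid_left)
    qed (auto simp: ej_def gmul_def)
  qed
  have "Lv d n (Yc h Y) (Tten d t) \<alpha> = (\<Sum>j\<in>{1..d}. tact d n (gT h) (tact d n (ej d n j (Y j)) (Tten d t)) \<alpha>)"
    unfolding Lv_def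
  proof (intro sum.cong refl)
    fix j assume j: "j \<in> {1..d}"
    have "tact d n (ej d n j (Yc h Y j)) (Tten d t) \<alpha>
        = tact d n (gT h) (tact d n (gmul d n (ej d n j (Y j)) (gTi h)) (Tten d t)) \<alpha>"
      unfolding ejY[OF j] by (rule tact_comp[OF \<alpha>, symmetric])
    also have "\<dots> = tact d n (gT h) (tact d n (ej d n j (Y j)) (Tten d t)) \<alpha>"
    proof (rule arg_cong[where f="\<lambda>v. v \<alpha>"], rule tact_cong)
      fix \<beta> assume \<beta>: "\<beta> \<in> tidx d n"
      have "tact d n (gmul d n (ej d n j (Y j)) (gTi h)) (Tten d t) \<beta>
          = tact d n (ej d n j (Y j)) (tact d n (gTi h) (Tten d t)) \<beta>"
        by (rule tact_comp[OF \<beta>, symmetric])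
      also have "\<dots> = tact d n (ej d n j (Y j)) (Tten d t) \<beta>"
        by (rule arg_cong[where f="\<lambda>v. v \<beta>"], rule tact_cong) (rule gTi_stab[OF h])
      finally show "tact d n (gmul d n (ej d n j (Y j)) (gTi h)) (Tten d t) \<beta> = tact d n (ej d n j (Y j)) (Tten d t) \<beta>" .
    qed
    finally show "tact d n (ej d n j (Yc h Y j)) (Tten d t) \<alpha> = tact d n (gT h) (tact d n (ej d n j (Y j)) (Tten d t)) \<alpha>" .
  qed
  also have "\<dots> = tact d n (gT h) (Lv d n Y (Tten d t)) \<alpha>"
    unfolding Lv_def by (rule tact_sum[symmetric])
  also have "\<dots> = tact d n (gT h) (\<lambda>_. 0) \<alpha>"
    by (rule arg_cong[where f="\<lambda>v. v \<alpha>"], rule tact_cong) (simp add: L0)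
  also have "\<dots> = 0" by (simp add: tact_def)
  finally show "Lv d n (Yc h Y) (Tten d t) \<alpha> = 0" .
qed

lemma orth_inv:
  assumes h: "h \<in> stabilizer d n (Tten d t)"
    and Z: "Z \<in> orth_compl d n (lie_alg d n (stabilizer d n (Tten d t)))"
  shows "tconj d n h Z \<in> orth_compl d n (lie_alg d n (stabilizer d n (Tten d t)))"
proof -
  have Zgl: "Z \<in> gl_alg d n" and Zo: "\<And>Y. Y \<in> lie_alg d n (stabilizer d n (Tten d t)) \<Longrightarrow> tinner d n Z Y = 0"
    using Z by (auto simp: orth_compl_def)
  have gl: "tconj d n h Z \<in> gl_alg d n" by (auto simp: tconj_def gl_alg_def)
  have "tinner d n (tconj d n h Z) Y = 0" if Y: "Y \<in> lie_alg d n (stabilizer d n (Tten d t))" for Y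
  proof -
    have "tinner d n (tconj d n h Z) Y = tinner d n Z (Yc h Y)"
      unfolding tinner_def
      by (rule sum.cong[OF refl]) (simp add: tconj_def Yc_def gT_def gTi_def inner_conj)
    also have "\<dots> = 0" by (rule Zo[OF Yc_lie[OF h Y]])
    finally show ?thesis .
  qed
  then show ?thesis using gl by (simp add: orth_compl_def)
qed

end
end

theorem mainTheorem10:
  fixes d :: nat and n t :: "nat \<Rightarrow> nat"
  assumes "d \<ge> 3"
    and "\<forall>i\<in>{1..d}. n i \<ge> 2"
    and "\<forall>i\<in>{1..d}. 0 < t i \<and> t i \<le> n i"
    and "t 1 = (\<Prod>i\<in>{2..d}. t i)"
  shows "(reductive d n (stabilizer d n (Tten d t)) \<longleftrightarrow> (\<forall>i\<in>{1..d}. n i = t i))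
     \<and> ((\<forall>i\<in>{1..d}. n i = t i) \<longrightarrow>
           (\<forall>h\<in>stabilizer d n (Tten d t).
              \<forall>Z\<in>orth_compl d n (lie_alg d n (stabilizer d n (Tten d t))).
                 tconj d n h Z \<in> orth_compl d n (lie_alg d n (stabilizer d n (Tten d t)))))"
proof -
  interpret tsetup d n t using assms by unfold_locales auto
  have A: "reductive d n (stabilizer d n (Tten d t)) \<longleftrightarrow> (\<forall>i\<in>{1..d}. n i = t i)"
  proof
    assume r: "reductive d n (stabilizer d n (Tten d t))"
    show "\<forall>i\<in>{1..d}. n i = t i" using not_reductive r by blast
  next
    assume nt: "\<forall>i\<in>{1..d}. n i = t i"
    show "reductive d n (stabilizer d n (Tten d t))" by (rule reductive_nt[OF nt])
  qed
  have B: "(\<forall>i\<in>{1..d}. n i = t i) \<longrightarrow>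
           (\<forall>h\<in>stabilizer d n (Tten d t).
              \<forall>Z\<in>orth_compl d n (lie_alg d n (stabilizer d n (Tten d t))).
                 tconj d n h Z \<in> orth_compl d n (lie_alg d n (stabilizer d n (Tten d t))))"
    using orth_inv by blast
  show ?thesis using A B by blast
qed

end
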